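(* Consider uniform sampling of $g$ from the global Clifford group $\mathrm{Cl}_n$ ($n\ge1$) with gate-dependent Pauli noise channels $\Lambda(g)$. Prepare $E_0=|0\cdots0\rangle\langle0\cdots0|$, apply $\omega(g)\Lambda(g)$, measure in the computational basis obtaining $x$ with probability $(E_x|\omega(g)\Lambda(g)|E_0)$, and compute $\hat f(g,x)=\frac{d\,(E_x|\omega(g)|E_0)-1}{d-1}$. Then $$\mathbb{E}_{g,x}[\hat f(g,x)]=\frac1{d+1}\cdot\frac1{d-1}\sum_{a\in\mathsf D\setminus\{0\}}\bar\lambda_a ,$$ i.e. $\frac1{d+1}$ times the average of $\bar\lambda_a$ over the $d-1$ nonzero labels $a$ of diagonal Pauli operators.
   Context: $d=2^n$; $(A|\mathcal X|B)=\mathrm{Tr}(A^\dagger\mathcal X(B))$; $\omega(g)(A)=gAg^\dagger$; $E_x=|x\rangle\langle x|$. Per-qubit Pauli labels $\sigma_{00}=\mathbb 1,\sigma_{01}=X,\sigma_{11}=Y,\sigma_{10}=Z$, $\sigma_a=\bigotimes_i\sigma_{a_i}$; $\mathsf D=\{00,10\}^n$ is the set of labels of diagonal Pauli operators. Pauli channel: $\Lambda(\rho)=\sum_bq_b\sigma_b\rho\sigma_b$ with $q$ a probability vector, eigenvalues $\Lambda(g)(\sigma_a)=\lambda_a(g)\sigma_a$. $Z_z=\bigotimes_iZ^{z_i}$; for $g\in\mathrm{Cl}_n$, $\Xi_z(g)$ is the Pauli $\sigma_b$ with $g^\dagger Z_zg=\pm\sigma_b$. With $p$ uniform on $\mathrm{Cl}_n$: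 $s_a=\sum_z\sum_{g:\Xi_z(g)=\sigma_a}p(g)$ and $\bar\lambda_a=s_a^{-1}\sum_z\sum_{g:\Xi_z(g)=\sigma_a}p(g)\lambda_a(g)$. *)

theory Defs
  imports "HOL-Analysis.Analysis" "Jordan_Normal_Form.Matrix"
begin

definition dagger :: "complex mat \<Rightarrow> complex mat" where
  "dagger A = mat (dim_col A) (dim_row A) (\<lambda>(i,j). cnj (A $$ (j,i)))"

definition mtrace :: "complex mat \<Rightarrow> complex" where
  "mtrace A = (\<Sum>i<dim_row A. A $$ (i,i))"

definition unitary_mat :: "nat \<Rightarrow> complex mat \<Rightarrow> bool" where
  "unitary_mat d U \<longleftrightarrow> U \<in> carrier_mat d d \<and> dagger U * U = 1\<^sub>m d \<and> U * dagger U = 1\<^sub>m d"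

text \<open>Kronecker (tensor) product; the first factor is the most significant one.\<close>
definition kron :: "complex mat \<Rightarrow> complex mat \<Rightarrow> complex mat" where
  "kron A B = mat (dim_row A * dim_row B) (dim_col A * dim_col B)
     (\<lambda>(i,j). A $$ (i div dim_row B, j div dim_col B) * B $$ (i mod dim_row B, j mod dim_col B))"

text \<open>Single-qubit Pauli labels (b1,b2): 00 = 1, 01 = X, 11 = Y, 10 = Z.\<close>
definition pauli1 :: "bool \<times> bool \<Rightarrow> complex mat" where
  "pauli1 p = (case p of
      (False, False) \<Rightarrow> mat_of_rows_list 2 [[1, 0], [0, 1]]
    | (False, True)  \<Rightarrow> mat_of_rows_list 2 [[0, 1], [1, 0]]
    | (True, True)   \<Rightarrow> mat_of_rows_list 2 [[0, -\<i>], [\<i>, 0]]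
    | (True, False)  \<Rightarrow> mat_of_rows_list 2 [[1, 0], [0, -1]])"

type_synonym plabel = "(bool \<times> bool) list"

definition pauli :: "plabel \<Rightarrow> complex mat" where
  "pauli a = foldr (\<lambda>p M. kron (pauli1 p) M) a (1\<^sub>m 1)"

definition labels :: "nat \<Rightarrow> plabel set" where
  "labels n = {a. length a = n}"

definition zero_label :: "nat \<Rightarrow> plabel" where
  "zero_label n = replicate n (False, False)"

definition diag_labels :: "nat \<Rightarrow> plabel set" where
  "diag_labels n = {a. length a = n \<and> (\<forall>p\<in>set a. p \<in> {(False,False), (True,False)})}"

definition Zop :: "bool list \<Rightarrow> complex mat" where
  "Zop z = pauli (map (\<lambda>b. (b, False)) z)"

definition clifford :: "nat \<Rightarrow> complex mat \<Rightarrow> bool" where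
  "clifford n U \<longleftrightarrow> unitary_mat (2^n) U \<and>
     (\<forall>a \<in> labels n. \<exists>b \<in> labels n. \<exists>c::complex. U * pauli a * dagger U = c \<cdot>\<^sub>m pauli b)"

text \<open>G is a set of representatives of Cl_n modulo global phases: a transversal.\<close>
definition clifford_transversal :: "nat \<Rightarrow> complex mat set \<Rightarrow> bool" where
  "clifford_transversal n G \<longleftrightarrow> (\<forall>g\<in>G. clifford n g) \<and>
     (\<forall>U. clifford n U \<longrightarrow> (\<exists>!g\<in>G. \<exists>c::complex. U = c \<cdot>\<^sub>m g))"

definition Xi :: "nat \<Rightarrow> bool list \<Rightarrow> complex mat \<Rightarrow> plabel" where
  "Xi n z g = (THE b. b \<in> labels n \<and>
      (dagger g * Zop z * g = pauli b \<or> dagger g * Zop z * g = - pauli b))"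

definition omega :: "complex mat \<Rightarrow> complex mat \<Rightarrow> complex mat" where
  "omega g A = g * A * dagger g"

definition pauli_channel :: "nat \<Rightarrow> (plabel \<Rightarrow> real) \<Rightarrow> complex mat \<Rightarrow> complex mat" where
  "pauli_channel n q \<rho> =
     mat (2^n) (2^n) (\<lambda>(i,j). \<Sum>b\<in>labels n. complex_of_real (q b) * (pauli b * \<rho> * pauli b) $$ (i,j))"

definition prob_vector :: "nat \<Rightarrow> (plabel \<Rightarrow> real) \<Rightarrow> bool" where
  "prob_vector n q \<longleftrightarrow> (\<forall>b\<in>labels n. 0 \<le> q b) \<and> (\<Sum>b\<in>labels n. q b) = 1"

definition pauli_eig :: "nat \<Rightarrow> (plabel \<Rightarrow> real) \<Rightarrow> plabel \<Rightarrow> complex" where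
  "pauli_eig n q a = (THE c. pauli_channel n q (pauli a) = c \<cdot>\<^sub>m pauli a)"

definition Ebasis :: "nat \<Rightarrow> nat \<Rightarrow> complex mat" where
  "Ebasis n x = mat (2^n) (2^n) (\<lambda>(i,j). if i = x \<and> j = x then 1 else 0)"

definition braket :: "complex mat \<Rightarrow> (complex mat \<Rightarrow> complex mat) \<Rightarrow> complex mat \<Rightarrow> complex" where
  "braket A X B = mtrace (dagger A * X B)"

definition s_weight :: "nat \<Rightarrow> complex mat set \<Rightarrow> plabel \<Rightarrow> complex" where
  "s_weight n G a = (\<Sum>z\<in>{z. length z = n}. \<Sum>g\<in>{g\<in>G. Xi n z g = a}. 1 / of_nat (card G))"

definition lambda_bar :: "nat \<Rightarrow> complex mat set \<Rightarrow> (complex mat \<Rightarrow> plabel \<Rightarrow> real) \<Rightarrow> plabel \<Rightarrow> complex" where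
  "lambda_bar n G q a = inverse (s_weight n G a) *
     (\<Sum>z\<in>{z. length z = n}. \<Sum>g\<in>{g\<in>G. Xi n z g = a}. (1 / of_nat (card G)) * pauli_eig n (q g) a)"

end

theory Submission
  imports Defs
begin

lemma mult_entry:
  assumes "A \<in> carrier_mat m k" "B \<in> carrier_mat k n" "i < m" "j < n"
  shows "(A * B) $$ (i,j) = (\<Sum>l<k. A $$ (i,l) * B $$ (l,j))"
proof -
  have "(A * B) $$ (i,j) = row A i \<bullet> col B j" using assms by auto
  also have "\<dots> = (\<Sum>l\<in>{0..<k}. A $$ (i,l) * B $$ (l,j))"
    unfolding scalar_prod_def using assms by (auto intro!: sum.cong)
  finally show ?thesis by (simp add: atLeast0LessThan)
qed

declare index_mult_mat(1)[simp del]

lemma smult_smult_m[simp]: "a \<cdot>\<^sub>m (b \<cdot>\<^sub>m A) = (a * b) \<cdot>\<^sub>m (A :: complex mat)"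
  by (rule eq_matI) auto

lemma one_smult_m[simp]: "1 \<cdot>\<^sub>m A = (A :: complex mat)"
  by (rule eq_matI) auto

lemma smult_mult_l: assumes "dim_col A = dim_row B" shows "(k \<cdot>\<^sub>m A) * B = k \<cdot>\<^sub>m (A * (B :: complex mat))"
proof -
  have "A \<in> carrier_mat (dim_row A) (dim_col A)" "B \<in> carrier_mat (dim_col A) (dim_col B)"
    using assms by (auto intro!: carrier_matI)
  then show ?thesis by (rule mult_smult_assoc_mat)
qed
lemma mult_smult_r: assumes "dim_col A = dim_row B" shows "A * (k \<cdot>\<^sub>m B) = k \<cdot>\<^sub>m (A * (B :: complex mat))"
proof -
  have "A \<in> carrier_mat (dim_row A) (dim_col A)" "B \<in> carrier_mat (dim_col A) (dim_col B)"
    using assms by (auto intro!: carrier_matI)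
  then show ?thesis by (rule mult_smult_distrib)
qed
lemma assoc': assumes "dim_col A = dim_row B" "dim_col B = dim_row C" shows "A * B * C = A * (B * (C :: complex mat))"
proof -
  have "A \<in> carrier_mat (dim_row A) (dim_col A)" "B \<in> carrier_mat (dim_col A) (dim_col B)"
      "C \<in> carrier_mat (dim_col B) (dim_col C)"
    using assms by (auto intro!: carrier_matI)
  then show ?thesis by (rule assoc_mult_mat)
qed

lemma dagger_carrier[simp]: "A \<in> carrier_mat m n \<Longrightarrow> dagger A \<in> carrier_mat n m"
  by (auto simp: dagger_def)

lemma dagger_dims[simp]: "dim_row (dagger A) = dim_col A" "dim_col (dagger A) = dim_row A"
  by (auto simp: dagger_def)

lemma dagger_index[simp]: "i < dim_col A \<Longrightarrow> j < dim_row A \<Longrightarrow> dagger A $$ (i,j) = cnj (A $$ (j,i))"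
  by (auto simp: dagger_def)

lemma dagger_mult:
  assumes "A \<in> carrier_mat m k" "B \<in> carrier_mat k n"
  shows "dagger (A * B) = dagger B * dagger A"
proof (rule eq_matI)
  fix i j assume "i < dim_row (dagger B * dagger A)" "j < dim_col (dagger B * dagger A)"
  then have ij: "i < n" "j < m" using assms by auto
  have "dagger (A * B) $$ (i,j) = cnj ((A * B) $$ (j,i))" using assms ij by auto
  also have "\<dots> = (\<Sum>l<k. cnj (A $$ (j,l)) * cnj (B $$ (l,i)))"
    using assms ij by (simp add: mult_entry)
  also have "\<dots> = (dagger B * dagger A) $$ (i,j)"
    using assms ij by (subst mult_entry[of _ n k _ m]) (auto simp: mult.commute intro!: sum.cong)
  finally show "dagger (A * B) $$ (i,j) = (dagger B * dagger A) $$ (i,j)" .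
qed (use assms in auto)

lemma dagger_dagger[simp]: "dagger (dagger A) = A"
  by (rule eq_matI) auto

lemma dagger_smult: "dagger (c \<cdot>\<^sub>m A) = cnj c \<cdot>\<^sub>m dagger A"
  by (rule eq_matI) auto

lemma dagger_one[simp]: "dagger (1\<^sub>m n) = 1\<^sub>m n"
  by (rule eq_matI) auto

lemma dagger_add: "A \<in> carrier_mat m n \<Longrightarrow> B \<in> carrier_mat m n \<Longrightarrow> dagger (A + B) = dagger A + dagger B"
  by (rule eq_matI) auto

lemma mtrace_mult_comm:
  assumes "A \<in> carrier_mat m n" "B \<in> carrier_mat n m"
  shows "mtrace (A * B) = mtrace (B * A)"
proof -
  have "mtrace (A * B) = (\<Sum>i<m. \<Sum>l<n. A $$ (i,l) * B $$ (l,i))"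
    unfolding mtrace_def using assms by (auto simp: mult_entry intro!: sum.cong)
  also have "\<dots> = (\<Sum>l<n. \<Sum>i<m. B $$ (l,i) * A $$ (i,l))"
    by (subst sum.swap) (simp add: mult.commute)
  also have "\<dots> = mtrace (B * A)"
    unfolding mtrace_def using assms by (auto simp: mult_entry intro!: sum.cong)
  finally show ?thesis .
qed

lemma mtrace_smult: "dim_col A = dim_row A \<Longrightarrow> mtrace (c \<cdot>\<^sub>m A) = c * mtrace A"
  by (simp add: mtrace_def sum_distrib_left)

lemma mtrace_add: "A \<in> carrier_mat n n \<Longrightarrow> B \<in> carrier_mat n n \<Longrightarrow> mtrace (A + B) = mtrace A + mtrace B"
  by (simp add: mtrace_def sum.distrib)

lemma mtrace_one[simp]: "mtrace (1\<^sub>m n) = of_nat n"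
  by (simp add: mtrace_def)

lemma mtrace_uminus: "dim_col A = dim_row A \<Longrightarrow> mtrace (- A) = - mtrace A"
  by (simp add: mtrace_def sum_negf)

lemma sum_lessThan_mult:
  fixes f :: "nat \<Rightarrow> 'c::comm_monoid_add" and a b :: nat
  shows   "(\<Sum>k<a*b. f k) = (\<Sum>i<a. \<Sum>j<b. f (i*b + j))"
proof (induction a)
  case 0 then show ?case by simp
next
  case (Suc a)
  have "(\<Sum>k<Suc a * b. f k) = (\<Sum>k\<in>{0..<a*b+b}. f k)"
    by (simp add: atLeast0LessThan add.commute)
  also have "\<dots> = (\<Sum>k\<in>{0..<a*b}. f k) + (\<Sum>k\<in>{a*b..<a*b+b}. f k)"
    by (rule sum.atLeastLessThan_concat[symmetric]) auto
  finally have "(\<Sum>k<Suc a * b. f k) = (\<Sum>k<a*b. f k) + (\<Sum>k\<in>{a*b..<a*b+b}. f k)"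
    by (simp add: atLeast0LessThan)
  also have "(\<Sum>k\<in>{a*b..<a*b+b}. f k) = (\<Sum>j<b. f (a*b + j))"
    by (rule sum.reindex_bij_witness[of _ "\<lambda>j. a*b+j" "\<lambda>k. k - a*b"]) auto
  finally show ?case using Suc by simp
qed

lemma kron_carrier[simp]:
  "A \<in> carrier_mat a1 a2 \<Longrightarrow> B \<in> carrier_mat b1 b2 \<Longrightarrow> kron A B \<in> carrier_mat (a1*b1) (a2*b2)"
  by (auto simp: kron_def)

lemma kron_dims[simp]: "dim_row (kron A B) = dim_row A * dim_row B" "dim_col (kron A B) = dim_col A * dim_col B"
  by (auto simp: kron_def)

lemma kron_index:
  "i < dim_row A * dim_row B \<Longrightarrow> j < dim_col A * dim_col B \<Longrightarrow>
   kron A B $$ (i,j) = A $$ (i div dim_row B, j div dim_col B) * B $$ (i mod dim_row B, j mod dim_col B)"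
  by (auto simp: kron_def)

lemma kron_mult:
  assumes A: "A \<in> carrier_mat a1 a2" and B: "B \<in> carrier_mat b1 b2"
    and C: "C \<in> carrier_mat a2 c2" and D: "D \<in> carrier_mat b2 d2"
    and pos: "b1 > 0" "b2 > 0" "d2 > 0"
  shows "kron A B * kron C D = kron (A * C) (B * D)"
proof (rule eq_matI)
  fix i j assume i: "i < dim_row (kron (A * C) (B * D))" and j: "j < dim_col (kron (A * C) (B * D))"
  then have i': "i < a1 * b1" and j': "j < c2 * d2" using A B C D by auto
  have idiv: "i div b1 < a1" "i mod b1 < b1" using i' pos by (auto simp: less_mult_imp_div_less)
  have jdiv: "j div d2 < c2" "j mod d2 < d2" using j' pos by (auto simp: less_mult_imp_div_less)
  have "(kron A B * kron C D) $$ (i,j) = (\<Sum>l<a2*b2. kron A B $$ (i,l) * kron C D $$ (l,j))"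
    using A B C D i' j' by (intro mult_entry) auto
  also have "\<dots> = (\<Sum>l1<a2. \<Sum>l2<b2. kron A B $$ (i,l1*b2+l2) * kron C D $$ (l1*b2+l2,j))"
    by (rule sum_lessThan_mult)
  also have "\<dots> = (\<Sum>l1<a2. \<Sum>l2<b2. (A $$ (i div b1, l1) * C $$ (l1, j div d2)) * (B $$ (i mod b1, l2) * D $$ (l2, j mod d2)))"
  proof (intro sum.cong refl)
    fix l1 l2 assume l: "l1 \<in> {..<a2}" "l2 \<in> {..<b2}"
    have lt: "l1*b2+l2 < a2*b2"
    proof -
      have "l1*b2+l2 < l1*b2+b2" using l by simp
      also have "\<dots> = Suc l1 * b2" by simp
      also have "\<dots> \<le> a2*b2" using l by (intro mult_le_mono1) auto
      finally show ?thesis .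
    qed
    have dv: "(l1*b2+l2) div b2 = l1" "(l1*b2+l2) mod b2 = l2" using l pos by auto
    show "kron A B $$ (i,l1*b2+l2) * kron C D $$ (l1*b2+l2,j) =
      (A $$ (i div b1, l1) * C $$ (l1, j div d2)) * (B $$ (i mod b1, l2) * D $$ (l2, j mod d2))"
      using A B C D i' j' lt l by (simp add: kron_index dv)
  qed
  also have "\<dots> = (A * C) $$ (i div b1, j div d2) * (B * D) $$ (i mod b1, j mod d2)"
    using A B C D idiv jdiv by (simp add: mult_entry sum_product)
  also have "\<dots> = kron (A * C) (B * D) $$ (i,j)"
    using A B C D i' j' by (simp add: kron_index)
  finally show "(kron A B * kron C D) $$ (i,j) = kron (A * C) (B * D) $$ (i,j)" .
next
  show "dim_row (kron A B * kron C D) = dim_row (kron (A * C) (B * D))"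
       "dim_col (kron A B * kron C D) = dim_col (kron (A * C) (B * D))" using A B C D by auto
qed

lemma div_bound: "(i::nat) < a * b \<Longrightarrow> i div b < a"
  by (simp add: less_mult_imp_div_less)

lemma mod_bound: "(i::nat) < a * b \<Longrightarrow> i mod b < b"
  by (metis mod_less_divisor mult_is_0 not_gr0 not_less_zero)

lemma kron_smult_left: "kron (c \<cdot>\<^sub>m A) B = c \<cdot>\<^sub>m kron A B"
  by (rule eq_matI) (auto simp: kron_index div_bound mod_bound)

lemma kron_smult_right: "kron A (c \<cdot>\<^sub>m B) = c \<cdot>\<^sub>m kron A B"
  by (rule eq_matI) (auto simp: kron_index div_bound mod_bound)

lemma kron_one: "b > 0 \<Longrightarrow> kron (1\<^sub>m a) (1\<^sub>m b) = 1\<^sub>m (a*b)"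
proof (rule eq_matI)
  fix i j assume "b > 0" "i < dim_row (1\<^sub>m (a * b))" "j < dim_col (1\<^sub>m (a * b))"
  then have "i < a*b" "j < a*b" "i div b < a" "j div b < a" "i mod b < b" "j mod b < b"
    by (auto simp: less_mult_imp_div_less)
  moreover have "(i div b = j div b \<and> i mod b = j mod b) = (i = j)"
    by (metis div_mult_mod_eq)
  ultimately show "kron (1\<^sub>m a) (1\<^sub>m b) $$ (i, j) = 1\<^sub>m (a * b) $$ (i, j)"
    by (auto simp: kron_index)
qed auto

lemma dagger_kron: "dagger (kron A B) = kron (dagger A) (dagger B)"
proof (rule eq_matI)
  fix i j assume "i < dim_row (kron (dagger A) (dagger B))" "j < dim_col (kron (dagger A) (dagger B))"
  then have ij: "i < dim_col A * dim_col B" "j < dim_row A * dim_row B" by auto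
  then have "dim_col B > 0" "dim_row B > 0" by (auto intro: gr0I)
  then have "i div dim_col B < dim_col A" "j div dim_row B < dim_row A" "i mod dim_col B < dim_col B" "j mod dim_row B < dim_row B"
    using ij by (auto simp: less_mult_imp_div_less)
  then show "dagger (kron A B) $$ (i, j) = kron (dagger A) (dagger B) $$ (i, j)"
    using ij by (simp add: kron_index)
qed auto

lemma mtrace_kron:
  assumes "A \<in> carrier_mat a a" "B \<in> carrier_mat b b"
  shows "mtrace (kron A B) = mtrace A * mtrace B"
proof -
  have "mtrace (kron A B) = (\<Sum>k<a*b. kron A B $$ (k,k))" using assms by (simp add: mtrace_def)
  also have "\<dots> = (\<Sum>i<a. \<Sum>j<b. kron A B $$ (i*b+j,i*b+j))" by (rule sum_lessThan_mult)
  also have "\<dots> = (\<Sum>i<a. \<Sum>j<b. A $$ (i,i) * B $$ (j,j))"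
  proof (intro sum.cong refl)
    fix i j assume ij: "i \<in> {..<a}" "j \<in> {..<b}"
    have lt: "i*b+j < a*b"
    proof -
      have "i*b+j < i*b+b" using ij by simp
      also have "\<dots> = Suc i * b" by simp
      also have "\<dots> \<le> a*b" using ij by (intro mult_le_mono1) auto
      finally show ?thesis .
    qed
    show "kron A B $$ (i*b+j,i*b+j) = A $$ (i,i) * B $$ (j,j)"
      using assms ij lt by (simp add: kron_index)
  qed
  also have "\<dots> = mtrace A * mtrace B" using assms by (simp add: mtrace_def sum_product)
  finally show ?thesis .
qed

lemma kron_00: "dim_row A > 0 \<Longrightarrow> dim_col A > 0 \<Longrightarrow> dim_row B > 0 \<Longrightarrow> dim_col B > 0 \<Longrightarrow>
  kron A B $$ (0,0) = A $$ (0,0) * B $$ (0,0)"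
  by (simp add: kron_index)

lemma less2: "(i::nat) < 2 \<longleftrightarrow> i = 0 \<or> i = 1" by auto

lemma sum2: "(\<Sum>l<2::nat. f l) = f 0 + f 1"
  by (simp add: numeral_2_eq_2)

lemma pauli1_carrier[simp]: "pauli1 p \<in> carrier_mat 2 2"
  by (cases p) (auto simp: pauli1_def mat_of_rows_list_def split: bool.splits)

lemma pauli1_dims[simp]: "dim_row (pauli1 p) = 2" "dim_col (pauli1 p) = 2"
  by (rule carrier_matD[OF pauli1_carrier])+

lemma pauli1_index: "i < 2 \<Longrightarrow> j < 2 \<Longrightarrow> pauli1 p $$ (i,j) =
   (case p of (False, False) \<Rightarrow> [[1, 0], [0, 1]]
    | (False, True)  \<Rightarrow> [[0, 1], [1, 0]]
    | (True, True)   \<Rightarrow> [[0, -\<i>], [\<i>, 0]]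
    | (True, False)  \<Rightarrow> [[1, 0], [0, -1]]) ! i ! j"
  by (cases p) (auto simp: pauli1_def mat_of_rows_list_def split: bool.splits)

lemma mat2_eqI: "A \<in> carrier_mat 2 2 \<Longrightarrow> B \<in> carrier_mat 2 2 \<Longrightarrow>
  A $$ (0,0) = B $$ (0,0) \<Longrightarrow> A $$ (0,1) = B $$ (0,1) \<Longrightarrow> A $$ (1,0) = B $$ (1,0) \<Longrightarrow> A $$ (1,1) = B $$ (1,1) \<Longrightarrow> A = B"
  by (rule eq_matI) (auto simp: less2)

lemma mult2_index: "A \<in> carrier_mat 2 2 \<Longrightarrow> B \<in> carrier_mat 2 2 \<Longrightarrow> i < 2 \<Longrightarrow> j < 2 \<Longrightarrow>
  (A * B) $$ (i,j) = A $$ (i,0) * B $$ (0,j) + A $$ (i,1) * B $$ (1,j)"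
  by (simp add: mult_entry sum2)

definition xor1 :: "bool \<times> bool \<Rightarrow> bool \<times> bool \<Rightarrow> bool \<times> bool" where
  "xor1 p p' = (fst p \<noteq> fst p', snd p \<noteq> snd p')"

definition anti1 :: "bool \<times> bool \<Rightarrow> bool \<times> bool \<Rightarrow> bool" where
  "anti1 p p' = ((fst p \<and> snd p') \<noteq> (snd p \<and> fst p'))"

definition ph1 :: "bool \<times> bool \<Rightarrow> bool \<times> bool \<Rightarrow> complex" where
  "ph1 p p' = (if p = (False,False) \<or> p' = (False,False) \<or> p = p' then 1
     else if (p,p') \<in> {((False,True),(True,True)), ((True,True),(True,False)), ((True,False),(False,True))}
     then \<i> else -\<i>)"

lemma pauli1_mult: "pauli1 p * pauli1 p' = ph1 p p' \<cdot>\<^sub>m pauli1 (xor1 p p')"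
  by (rule mat2_eqI) (cases p; cases p'; auto simp: mult2_index pauli1_index xor1_def ph1_def split: bool.splits)+

lemma pauli1_comm: "pauli1 p * pauli1 p' = (if anti1 p p' then -1 else 1) \<cdot>\<^sub>m (pauli1 p' * pauli1 p)"
  by (rule mat2_eqI) (cases p; cases p'; auto simp: mult2_index pauli1_index anti1_def split: bool.splits)+

lemma pauli1_herm: "dagger (pauli1 p) = pauli1 p"
  by (rule mat2_eqI) (cases p; auto simp: pauli1_index split: bool.splits)+

lemma pauli1_sq: "pauli1 p * pauli1 p = 1\<^sub>m 2"
  by (rule mat2_eqI) (cases p; auto simp: mult2_index pauli1_index split: bool.splits)+

lemma pauli1_trace: "mtrace (pauli1 p) = (if p = (False,False) then 2 else 0)"
  by (cases p) (auto simp: mtrace_def sum2 pauli1_index split: bool.splits)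

lemma pauli1_00: "pauli1 p $$ (0,0) = (if snd p then 0 else 1)"
  by (cases p) (auto simp: pauli1_index split: bool.splits)

lemma pauli1_id: "pauli1 (False,False) = 1\<^sub>m 2"
  by (rule mat2_eqI) (auto simp: pauli1_index)

lemma pauli1_Z: "i < 2 \<Longrightarrow> j < 2 \<Longrightarrow> pauli1 (b,False) $$ (i,j) = (if i = j then (if b \<and> i = 1 then -1 else 1) else 0)"
  by (cases b) (auto simp: pauli1_index less2)

section \<open>Multi-qubit Paulis\<close>

fun xorl :: "plabel \<Rightarrow> plabel \<Rightarrow> plabel" where
  "xorl (p#a) (p'#b) = xor1 p p' # xorl a b"
| "xorl _ _ = []"

fun sympl :: "plabel \<Rightarrow> plabel \<Rightarrow> bool" where
  "sympl (p#a) (p'#b) = (anti1 p p' \<noteq> sympl a b)"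
| "sympl _ _ = False"

definition sg :: "bool \<Rightarrow> complex" where "sg b = (if b then -1 else 1)"

lemma pauli_Nil: "pauli [] = 1\<^sub>m 1" by (simp add: pauli_def)
lemma pauli_Cons: "pauli (p#a) = kron (pauli1 p) (pauli a)" by (simp add: pauli_def)

lemma pauli_carrier[simp]: "pauli a \<in> carrier_mat (2^length a) (2^length a)"
  by (induction a) (auto simp: pauli_Nil pauli_Cons)

lemma pauli_dims[simp]: "dim_row (pauli a) = 2^length a" "dim_col (pauli a) = 2^length a"
  by (rule carrier_matD[OF pauli_carrier])+

lemma pauli_kron_mult: "length a = length b \<Longrightarrow>
  kron (pauli1 p) (pauli a) * kron (pauli1 p') (pauli b) = kron (pauli1 p * pauli1 p') (pauli a * pauli b)"
  by (rule kron_mult[of _ 2 2 _ "2^length a" "2^length a" _ 2 _ "2^length a"]) auto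

lemma length_xorl[simp]: "length a = length b \<Longrightarrow> length (xorl a b) = length a"
  by (induction a b rule: xorl.induct) auto

lemma pauli_herm: "dagger (pauli a) = pauli a"
  by (induction a) (auto simp: pauli_Nil pauli_Cons dagger_kron pauli1_herm)

lemma pauli_mult: "length a = length b \<Longrightarrow> \<exists>c. pauli a * pauli b = c \<cdot>\<^sub>m pauli (xorl a b)"
proof (induction a b rule: xorl.induct)
  case (1 p a p' b)
  then obtain c where c: "pauli a * pauli b = c \<cdot>\<^sub>m pauli (xorl a b)" by auto
  have "pauli (p#a) * pauli (p'#b) = kron (pauli1 p * pauli1 p') (pauli a * pauli b)"
    using 1(2) by (simp add: pauli_Cons pauli_kron_mult)
  also have "\<dots> = (ph1 p p' * c) \<cdot>\<^sub>m pauli (xorl (p#a) (p'#b))"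
    by (simp add: c pauli1_mult kron_smult_left kron_smult_right pauli_Cons mult.commute)
  finally show ?case by blast
qed (auto intro!: exI[of _ 1] simp: pauli_Nil)

lemma pauli_sq: "pauli a * pauli a = 1\<^sub>m (2^length a)"
proof (induction a)
  case Nil then show ?case by (simp add: pauli_Nil)
next
  case (Cons p a)
  have "pauli (p#a) * pauli (p#a) = kron (pauli1 p * pauli1 p) (pauli a * pauli a)"
    by (simp add: pauli_Cons pauli_kron_mult)
  then show ?case using Cons by (simp add: pauli1_sq kron_one)
qed

lemma sg_mult: "sg a * sg b = sg (a \<noteq> b)" by (simp add: sg_def)

lemma pauli_comm: "length a = length b \<Longrightarrow> pauli a * pauli b = sg (sympl a b) \<cdot>\<^sub>m (pauli b * pauli a)"
proof (induction a b rule: xorl.induct)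
  case (1 p a p' b)
  then have IH: "pauli a * pauli b = sg (sympl a b) \<cdot>\<^sub>m (pauli b * pauli a)" by auto
  have "pauli (p#a) * pauli (p'#b) = kron (pauli1 p * pauli1 p') (pauli a * pauli b)"
    using 1(2) by (simp add: pauli_Cons pauli_kron_mult)
  also have "\<dots> = (sg (anti1 p p') * sg (sympl a b)) \<cdot>\<^sub>m kron (pauli1 p' * pauli1 p) (pauli b * pauli a)"
    by (simp add: IH pauli1_comm[of p] kron_smult_left kron_smult_right sg_def)
  also have "kron (pauli1 p' * pauli1 p) (pauli b * pauli a) = pauli (p'#b) * pauli (p#a)"
    using 1(2) by (simp add: pauli_Cons pauli_kron_mult)
  finally show ?case by (simp add: sg_mult)
qed (auto simp: sg_def pauli_Nil)

definition is_zero :: "plabel \<Rightarrow> bool" where "is_zero a = (\<forall>p\<in>set a. p = (False,False))"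

lemma pauli_trace: "mtrace (pauli a) = (if is_zero a then 2^length a else 0)"
proof (induction a)
  case Nil then show ?case by (simp add: pauli_Nil is_zero_def)
next
  case (Cons p a)
  then show ?case by (simp add: pauli_Cons mtrace_kron[of _ 2 _ "2^length a"] pauli1_trace is_zero_def)
qed

lemma pauli_00: "pauli a $$ (0,0) = (if \<forall>p\<in>set a. \<not> snd p then 1 else 0)"
proof (induction a)
  case Nil then show ?case by (simp add: pauli_Nil)
next
  case (Cons p a)
  then show ?case by (simp add: pauli_Cons kron_00 pauli1_00)
qed

lemma is_zero_xorl: "length a = length b \<Longrightarrow> is_zero (xorl a b) = (a = b)"
  by (induction a b rule: xorl.induct) (auto simp: is_zero_def xor1_def prod_eq_iff)

lemma is_zero_iff: "is_zero a = (a = zero_label (length a))"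
  by (induction a) (auto simp: is_zero_def zero_label_def)

lemma pauli_zero: "is_zero a \<Longrightarrow> pauli a = 1\<^sub>m (2^length a)"
  by (induction a) (auto simp: is_zero_def pauli_Nil pauli_Cons pauli1_id kron_one)


lemma finite_len[simp]: "finite {w :: 'a::finite list. length w = n}"
  using finite_lists_length_eq[of "UNIV :: 'a set" n] by simp

lemma card_len: "card {w :: 'a::finite list. length w = n} = CARD('a) ^ n"
  using card_lists_length_eq[of "UNIV :: 'a set" n] by simp

lemma sum_len_Suc:
  "(\<Sum>w\<in>{w :: 'a::finite list. length w = Suc n}. f w) = (\<Sum>b\<in>UNIV. \<Sum>w\<in>{w. length w = n}. f (b#w))"
proof -
  have eq: "{w :: 'a list. length w = Suc n} = (\<lambda>(b,w). b#w) ` (UNIV \<times> {w. length w = n})"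
    by (auto simp: image_iff length_Suc_conv)
  have inj: "inj_on (\<lambda>(b,w). b#w) (UNIV \<times> {w :: 'a list. length w = n})"
    by (auto simp: inj_on_def)
  show ?thesis
    unfolding eq by (subst sum.reindex[OF inj]) (simp add: sum.cartesian_product split_def)
qed

lemma pauli_nonzero: "pauli a \<noteq> 0\<^sub>m (2^length a) (2^length a)"
proof
  assume "pauli a = 0\<^sub>m (2^length a) (2^length a)"
  then have "pauli a * pauli a = 0\<^sub>m (2^length a) (2^length a)" by simp
  then have "1\<^sub>m (2^length a) $$ (0,0) = (0\<^sub>m (2^length a) (2^length a) :: complex mat) $$ (0,0)"
    by (simp add: pauli_sq)
  then show False by simp
qed

lemma pauli_trace_mult: "length a = length b \<Longrightarrow> mtrace (pauli a * pauli b) = (if a = b then 2^length a else 0)"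
proof -
  assume l: "length a = length b"
  show ?thesis
  proof (cases "a = b")
    case True then show ?thesis by (simp add: pauli_sq)
  next
    case False
    obtain c where c: "pauli a * pauli b = c \<cdot>\<^sub>m pauli (xorl a b)" using pauli_mult[OF l] by auto
    have "mtrace (pauli (xorl a b)) = 0" using False l by (simp add: pauli_trace is_zero_xorl)
    then show ?thesis using False c l by (simp add: mtrace_smult)
  qed
qed

lemma pauli_prop: assumes "length a = length b" "pauli a = c \<cdot>\<^sub>m pauli b" shows "a = b"
proof (rule ccontr)
  assume ne: "a \<noteq> b"
  have "pauli a * pauli b = c \<cdot>\<^sub>m (pauli b * pauli b)"
    using assms by (simp add: smult_mult_l)
  then have "mtrace (pauli a * pauli b) = c * 2^length a"
    using assms by (simp add: pauli_sq mtrace_smult)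
  then have "c = 0" using ne assms(1) by (simp add: pauli_trace_mult)
  then have "pauli a = 0\<^sub>m (2^length a) (2^length a)" using assms by (auto intro!: eq_matI)
  then show False using pauli_nonzero by blast
qed

lemma anti1_sym: "anti1 p p' = anti1 p' p" by (auto simp: anti1_def)

lemma sympl_sym: "length a = length b \<Longrightarrow> sympl a b = sympl b a"
  by (induction a b rule: xorl.induct) (auto simp: anti1_sym)

lemma pauli_conj: assumes "length a = length b"
  shows "pauli b * pauli a * pauli b = sg (sympl a b) \<cdot>\<^sub>m pauli a"
proof -
  have "pauli b * pauli a = sg (sympl a b) \<cdot>\<^sub>m (pauli a * pauli b)"
    using pauli_comm[of b a] assms by (simp add: sympl_sym)
  then have "pauli b * pauli a * pauli b = sg (sympl a b) \<cdot>\<^sub>m (pauli a * pauli b) * pauli b" by simp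
  also have "\<dots> = sg (sympl a b) \<cdot>\<^sub>m (pauli a * pauli b * pauli b)"
    using assms by (simp add: smult_mult_l)
  also have "pauli a * pauli b * pauli b = pauli a"
    using assms by (simp add: assoc' pauli_sq)
  finally show ?thesis .
qed

definition zl :: "bool list \<Rightarrow> plabel" where "zl w = map (\<lambda>b. (b, False)) w"

lemma length_zl[simp]: "length (zl w) = length w" by (simp add: zl_def)

fun zs :: "bool list \<Rightarrow> nat \<Rightarrow> complex" where
  "zs [] i = 1"
| "zs (b#w) i = (if b \<and> i div 2^length w = 1 then -1 else 1) * zs w (i mod 2^length w)"

lemma Zop_pauli: "Zop w = pauli (zl w)" by (simp add: Zop_def zl_def)

lemma zl_Cons: "zl (b#w) = (b,False) # zl w" by (simp add: zl_def)

lemma Zop_dims[simp]: "dim_row (Zop w) = 2^length w" "dim_col (Zop w) = 2^length w"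
  by (simp_all add: Zop_pauli)

lemma zs_sq: "zs w i * zs w i = 1"
  by (induction w arbitrary: i) (auto simp: algebra_simps)

lemma div_mod_eq_iff: "((i::nat) div b = j div b \<and> i mod b = j mod b) = (i = j)"
  by (metis div_mult_mod_eq)

lemma Zop_index: "i < 2^length w \<Longrightarrow> j < 2^length w \<Longrightarrow> Zop w $$ (i,j) = (if i = j then zs w i else 0)"
proof (induction w arbitrary: i j)
  case Nil then show ?case by (simp add: Zop_def pauli_Nil)
next
  case (Cons b w)
  have Zc: "Zop (b#w) = kron (pauli1 (b,False)) (Zop w)" by (simp add: Zop_pauli zl_Cons pauli_Cons)
  have b1: "i div 2^length w < 2" "j div 2^length w < 2" using Cons.prems by (auto simp: div_bound mult.commute)
  have b2: "i mod 2^length w < 2^length w" "j mod 2^length w < 2^length w" by auto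
  have "Zop (b#w) $$ (i,j) = pauli1 (b,False) $$ (i div 2^length w, j div 2^length w) * Zop w $$ (i mod 2^length w, j mod 2^length w)"
    using Cons.prems unfolding Zc by (simp add: kron_index)
  also have "\<dots> = (if i = j then zs (b#w) i else 0)"
    using b1 b2 Cons.IH[OF b2(1) b2(2)] div_mod_eq_iff[of i "2^length w" j]
    by (auto simp: pauli1_Z)
  finally show ?case .
qed

lemma Zop_carrier[simp]: "Zop w \<in> carrier_mat (2^length w) (2^length w)"
  using pauli_carrier[of "zl w"] by (simp add: Zop_pauli)

lemma zs_orth: "i < 2^n \<Longrightarrow> j < 2^n \<Longrightarrow>
  (\<Sum>w\<in>{w. length w = n}. zs w i * zs w j) = (if i = j then 2^n else 0)"
proof (induction n arbitrary: i j)
  case 0 then show ?case by simp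
next
  case (Suc n)
  have b1: "i div 2^n < 2" "j div 2^n < 2" using Suc.prems by (auto simp: div_bound mult.commute)
  have b2: "i mod 2^n < 2^n" "j mod 2^n < 2^n" by auto
  have "(\<Sum>w\<in>{w. length w = Suc n}. zs w i * zs w j) =
     (\<Sum>b\<in>UNIV. \<Sum>w\<in>{w. length w = n}. ((if b \<and> i div 2^n = 1 then -1 else 1) * (if b \<and> j div 2^n = 1 then -1 else 1)) *
        (zs w (i mod 2^n) * zs w (j mod 2^n)))"
    by (simp add: sum_len_Suc algebra_simps)
  also have "\<dots> = (\<Sum>b\<in>UNIV. ((if b \<and> i div 2^n = 1 then -1 else 1) * (if b \<and> j div 2^n = 1 then -1 else 1)) *
        (if i mod 2^n = j mod 2^n then 2^n else 0))"
    by (simp add: sum_distrib_left[symmetric] Suc.IH[OF b2])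
  also have "\<dots> = (if i = j then 2^Suc n else 0)"
    using b1 div_mod_eq_iff[of i "2^n" j] by (auto simp: UNIV_bool less2)
  finally show ?case .
qed

lemma zl_diag: "zl w \<in> diag_labels (length w)"
  by (auto simp: zl_def diag_labels_def)

lemma zl_zero: "is_zero (zl w) = (w = replicate (length w) False)"
  by (induction w) (auto simp: zl_def is_zero_def)



section \<open>Unitaries and Cliffords\<close>

lemma unitaryD:
  assumes "unitary_mat d U"
  shows "dim_row U = d" "dim_col U = d" "dagger U * U = 1\<^sub>m d" "U * dagger U = 1\<^sub>m d"
  using assms by (auto simp: unitary_mat_def)

lemma unitary_cancelL:
  assumes "unitary_mat d U" "dim_row X = d"
  shows "dagger U * (U * X) = X"
proof -
  have "dagger U * (U * X) = dagger U * U * X" using unitaryD[OF assms(1)] assms(2) by (intro assoc'[symmetric]) simp_all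
  then show ?thesis using unitaryD[OF assms(1)] assms(2) by simp
qed

lemma unitary_cancelR:
  assumes "unitary_mat d U" "dim_row X = d"
  shows "U * (dagger U * X) = X"
proof -
  have "U * (dagger U * X) = U * dagger U * X" using unitaryD[OF assms(1)] assms(2) by (intro assoc'[symmetric]) simp_all
  then show ?thesis using unitaryD[OF assms(1)] assms(2) by simp
qed

lemma clifford_unitary: "clifford n U \<Longrightarrow> unitary_mat (2^n) U"
  by (simp add: clifford_def)

lemma zero_smult_m: "0 \<cdot>\<^sub>m (A :: complex mat) = 0\<^sub>m (dim_row A) (dim_col A)"
  by (rule eq_matI) auto

lemma uminus_smult: "- A = (-1) \<cdot>\<^sub>m (A :: complex mat)"
  by (rule eq_matI) auto

lemma conj_cancel:
  assumes U: "unitary_mat d U" and P: "P \<in> carrier_mat d d"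
  shows "dagger U * (U * P * dagger U) * U = P"
proof -
  note D = unitaryD[OF U]
  have "dagger U * (U * P * dagger U) * U = dagger U * (U * (P * (dagger U * U)))"
    using D P by (simp add: assoc')
  also have "\<dots> = P" using D P by (simp add: unitary_cancelL[OF U])
  finally show ?thesis .
qed

lemma conj_cancel':
  assumes U: "unitary_mat d U" and P: "P \<in> carrier_mat d d"
  shows "U * (dagger U * P * U) * dagger U = P"
proof -
  note D = unitaryD[OF U]
  have "U * (dagger U * P * U) * dagger U = U * (dagger U * (P * (U * dagger U)))"
    using D P by (simp add: assoc')
  also have "\<dots> = P" using D P by (simp add: unitary_cancelR[OF U])
  finally show ?thesis .
qed

lemma conj_smult:
  assumes U: "unitary_mat d U" and P: "P \<in> carrier_mat d d"
  shows "dagger U * (c \<cdot>\<^sub>m P) * U = c \<cdot>\<^sub>m (dagger U * P * U)"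
  using unitaryD[OF U] P by (simp add: smult_mult_l mult_smult_r)

lemma conj_mult:
  assumes U: "unitary_mat d U" and P: "P \<in> carrier_mat d d" and Q: "Q \<in> carrier_mat d d"
  shows "(dagger U * P * U) * (dagger U * Q * U) = dagger U * (P * Q) * U"
proof -
  note D = unitaryD[OF U]
  have 1: "(dagger U * P * U) * (dagger U * Q * U) = dagger U * (P * (U * (dagger U * (Q * U))))"
    using D P Q by (simp add: assoc')
  have 2: "U * (dagger U * (Q * U)) = Q * U" by (rule unitary_cancelR[OF U]) (use Q in auto)
  have 3: "dagger U * (P * Q) * U = dagger U * (P * (Q * U))" using D P Q by (simp add: assoc')
  show ?thesis by (simp only: 1 2 3)
qed

lemma smult_eq_one: assumes "c \<cdot>\<^sub>m 1\<^sub>m d = 1\<^sub>m d" "d > 0" shows "c = (1::complex)"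
proof -
  have "(c \<cdot>\<^sub>m 1\<^sub>m d) $$ (0,0) = (1\<^sub>m d :: complex mat) $$ (0,0)" by (simp only: assms(1))
  then show ?thesis using assms(2) by simp
qed

lemma pauli_carrier': "length a = n \<Longrightarrow> pauli a \<in> carrier_mat (2^n) (2^n)"
  by auto

lemma clifford_inv_conj:
  assumes g: "clifford n g" and b: "length b = n"
  shows "\<exists>a e. length a = n \<and> (e = 1 \<or> e = -1) \<and> dagger g * pauli b * g = e \<cdot>\<^sub>m pauli a"
proof -
  let ?L = "labels n"
  have U: "unitary_mat (2^n) g" using g by (simp add: clifford_def)
  note D = unitaryD[OF U]
  have cl: "\<forall>a\<in>?L. \<exists>b\<in>?L. \<exists>c. g * pauli a * dagger g = c \<cdot>\<^sub>m pauli b" using g by (simp add: clifford_def)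
  define f where "f a = (SOME b. b \<in> ?L \<and> (\<exists>c. g * pauli a * dagger g = c \<cdot>\<^sub>m pauli b))" for a
  have fL: "f a \<in> ?L \<and> (\<exists>c. g * pauli a * dagger g = c \<cdot>\<^sub>m pauli (f a))" if "a \<in> ?L" for a
    unfolding f_def by (rule someI_ex) (use cl that in blast)
  have bk: "pauli a = c \<cdot>\<^sub>m (dagger g * pauli b * g)" if "a \<in> ?L" "b \<in> ?L" "g * pauli a * dagger g = c \<cdot>\<^sub>m pauli b" for a b c
  proof -
    have "pauli a = dagger g * (g * pauli a * dagger g) * g"
      using conj_cancel[OF U pauli_carrier'[of a n]] that by (simp add: labels_def)
    also have "\<dots> = c \<cdot>\<^sub>m (dagger g * pauli b * g)"
      using that conj_smult[OF U pauli_carrier'[of b n]] by (simp add: labels_def)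
    finally show ?thesis .
  qed
  have cnz: "c \<noteq> 0" if "a \<in> ?L" "b \<in> ?L" "g * pauli a * dagger g = c \<cdot>\<^sub>m pauli b" for a b c
  proof
    assume "c = 0"
    then have "pauli a = 0\<^sub>m (2^n) (2^n)" using bk[OF that] that D by (simp add: zero_smult_m)
    then show False using pauli_nonzero[of a] that by (simp add: labels_def)
  qed
  have inj: "inj_on f ?L"
  proof (rule inj_onI)
    fix a a' assume a: "a \<in> ?L" and a': "a' \<in> ?L" and eq: "f a = f a'"
    obtain c where c: "g * pauli a * dagger g = c \<cdot>\<^sub>m pauli (f a)" using fL[OF a] by auto
    obtain c' where c': "g * pauli a' * dagger g = c' \<cdot>\<^sub>m pauli (f a)" using fL[OF a'] eq by auto
    have fa: "f a \<in> ?L" using fL[OF a] by auto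
    have c'nz: "c' \<noteq> 0" using cnz[OF a' fa c'] .
    have "pauli a = c \<cdot>\<^sub>m (dagger g * pauli (f a) * g)" using bk[OF a fa c] .
    also have "dagger g * pauli (f a) * g = (1/c') \<cdot>\<^sub>m pauli a'"
      using bk[OF a' fa c'] c'nz by simp
    finally have "pauli a = (c / c') \<cdot>\<^sub>m pauli a'" by simp
    then show "a = a'" using pauli_prop a a' by (auto simp: labels_def)
  qed
  have fin: "finite ?L" by (simp add: labels_def)
  have "f ` ?L = ?L" by (rule endo_inj_surj[OF fin _ inj]) (use fL in auto)
  moreover have bL: "b \<in> ?L" using b by (simp add: labels_def)
  ultimately obtain a where a: "a \<in> ?L" and fa: "f a = b" by force
  obtain c where c: "g * pauli a * dagger g = c \<cdot>\<^sub>m pauli b" using fL[OF a] fa by auto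
  have cz: "c \<noteq> 0" using cnz[OF a bL c] .
  have M: "dagger g * pauli b * g = (1/c) \<cdot>\<^sub>m pauli a" using bk[OF a bL c] cz by simp
  have "(dagger g * pauli b * g) * (dagger g * pauli b * g) = dagger g * (pauli b * pauli b) * g"
    using conj_mult[OF U pauli_carrier'[OF b] pauli_carrier'[OF b]] .
  also have "\<dots> = 1\<^sub>m (2^n)" using D b by (simp add: pauli_sq)
  finally have "((1/c) * (1/c)) \<cdot>\<^sub>m 1\<^sub>m (2^n) = 1\<^sub>m (2^n)"
    using M a by (simp add: smult_mult_l mult_smult_r pauli_sq labels_def)
  then have "(1/c) * (1/c) = 1" by (rule smult_eq_one) simp
  then have "1/c = 1 \<or> 1/c = -1"
    by (metis power2_eq_square power2_eq_1_iff)
  then show ?thesis using M a by (intro exI[of _ a] exI[of _ "1/c"]) (auto simp: labels_def)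
qed

lemma Xi_eq:
  assumes "length a = n" "e = 1 \<or> e = -1" "dagger g * Zop w * g = e \<cdot>\<^sub>m pauli a"
  shows "Xi n w g = a"
  unfolding Xi_def
proof (rule the_equality)
  show "a \<in> labels n \<and> (dagger g * Zop w * g = pauli a \<or> dagger g * Zop w * g = - pauli a)"
    using assms by (auto simp: labels_def uminus_smult)
next
  fix b assume b: "b \<in> labels n \<and> (dagger g * Zop w * g = pauli b \<or> dagger g * Zop w * g = - pauli b)"
  have "pauli b = e \<cdot>\<^sub>m pauli a \<or> pauli b = (- e) \<cdot>\<^sub>m pauli a"
  proof (cases "dagger g * Zop w * g = pauli b")
    case True then show ?thesis using assms(3) by simp
  next
    case False
    then have "dagger g * Zop w * g = - pauli b" using b by auto
    then have "pauli b = - (e \<cdot>\<^sub>m pauli a)" using assms(3) by simp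
    then show ?thesis by (simp add: uminus_smult[of "e \<cdot>\<^sub>m pauli a"])
  qed
  then show "b = a" using pauli_prop b assms(1) by (auto simp: labels_def)
qed

lemma Xi_prop:
  assumes g: "clifford n g" and w: "length w = n"
  shows "length (Xi n w g) = n \<and> (\<exists>e. (e = 1 \<or> e = -1) \<and> dagger g * Zop w * g = e \<cdot>\<^sub>m pauli (Xi n w g))"
proof -
  obtain a e where a: "length a = n" "e = 1 \<or> e = -1" "dagger g * pauli (zl w) * g = e \<cdot>\<^sub>m pauli a"
    using clifford_inv_conj[OF g, of "zl w"] w by auto
  then have "Xi n w g = a" using Xi_eq[of a n e g w] by (simp add: Zop_pauli)
  then show ?thesis using a by (auto simp: Zop_pauli)
qed

lemma Xi_zero:
  assumes g: "clifford n g" and w: "length w = n"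
  shows "is_zero (Xi n w g) = (w = replicate n False)"
proof -
  obtain e where e: "e = 1 \<or> e = -1" "dagger g * Zop w * g = e \<cdot>\<^sub>m pauli (Xi n w g)"
    and l: "length (Xi n w g) = n" using Xi_prop[OF g w] by auto
  have U: "unitary_mat (2^n) g" using g by (simp add: clifford_def)
  have Zw: "Zop w = g * (dagger g * Zop w * g) * dagger g"
    by (rule conj_cancel'[OF U, symmetric]) (use Zop_carrier[of w] w in simp)
  show ?thesis
  proof
    assume z: "is_zero (Xi n w g)"
    have "Zop w = g * (e \<cdot>\<^sub>m 1\<^sub>m (2^n)) * dagger g" using Zw e z l by (simp add: pauli_zero)
    also have "\<dots> = e \<cdot>\<^sub>m (g * dagger g)" using unitaryD[OF U] by (simp add: smult_mult_l mult_smult_r)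
    also have "\<dots> = e \<cdot>\<^sub>m pauli (zero_label n)" using unitaryD[OF U]
      by (simp add: pauli_zero is_zero_iff zero_label_def)
    finally have "zl w = zero_label n" using pauli_prop[of "zl w" "zero_label n"] w
      by (simp add: Zop_pauli zero_label_def)
    then have "is_zero (zl w)" by (simp add: is_zero_def zero_label_def)
    then show "w = replicate n False" using zl_zero[of w] w by simp
  next
    assume wz: "w = replicate n False"
    then have "is_zero (zl w)" using zl_zero by simp
    then have "Zop w = 1\<^sub>m (2^n)" using w by (simp add: Zop_pauli pauli_zero)
    then have "dagger g * Zop w * g = 1\<^sub>m (2^n)" using unitaryD[OF U] by simp
    then have "pauli (zero_label n) = e \<cdot>\<^sub>m pauli (Xi n w g)" using e
      by (simp add: pauli_zero is_zero_iff zero_label_def)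
    then have "zero_label n = Xi n w g" using pauli_prop l by (simp add: zero_label_def)
    then show "is_zero (Xi n w g)" using l by (simp add: is_zero_iff)
  qed
qed


definition hmat :: "plabel \<Rightarrow> plabel \<Rightarrow> complex mat" where
  "hmat a b = complex_of_real (1 / sqrt 2) \<cdot>\<^sub>m (pauli a + pauli b)"

lemma k2: "complex_of_real (1 / sqrt 2) * complex_of_real (1 / sqrt 2) = 1/2"
proof -
  have "(1 / sqrt 2) * (1 / sqrt 2) = (1/2 :: real)" by (simp add: divide_simps)
  then show ?thesis by (metis of_real_mult of_real_divide of_real_1 of_real_numeral)
qed

lemma sandwich_expand:
  fixes A B R :: "complex mat"
  assumes "A \<in> carrier_mat d d" "B \<in> carrier_mat d d" "R \<in> carrier_mat d d"
  shows "(k \<cdot>\<^sub>m (A + B)) * R * (k \<cdot>\<^sub>m (A + B)) = (k * k) \<cdot>\<^sub>m (A * R * A + A * R * B + (B * R * A + B * R * B))"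
proof -
  have "(A + B) * R = A * R + B * R" using assms by (rule add_mult_distrib_mat)
  then have "(A + B) * R * (A + B) = (A * R + B * R) * (A + B)" by simp
  also have "\<dots> = A * R * (A + B) + B * R * (A + B)"
    using assms by (intro add_mult_distrib_mat[of _ d d]) auto
  also have "A * R * (A + B) = A * R * A + A * R * B"
    using assms by (intro mult_add_distrib_mat[of _ d d]) auto
  also have "B * R * (A + B) = B * R * A + B * R * B"
    using assms by (intro mult_add_distrib_mat[of _ d d]) auto
  finally have e: "(A + B) * R * (A + B) = A * R * A + A * R * B + (B * R * A + B * R * B)" .
  note dd = carrier_matD[OF assms(1)] carrier_matD[OF assms(2)] carrier_matD[OF assms(3)]
  have s1: "(k \<cdot>\<^sub>m (A + B)) * R = k \<cdot>\<^sub>m ((A + B) * R)" by (rule smult_mult_l) (use dd in simp)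
  have s2: "(k \<cdot>\<^sub>m ((A + B) * R)) * (k \<cdot>\<^sub>m (A + B)) = k \<cdot>\<^sub>m ((A + B) * R * (k \<cdot>\<^sub>m (A + B)))"
    by (rule smult_mult_l) (use dd in simp)
  have s3: "(A + B) * R * (k \<cdot>\<^sub>m (A + B)) = k \<cdot>\<^sub>m ((A + B) * R * (A + B))"
    by (rule mult_smult_r) (use dd in simp)
  have "(k \<cdot>\<^sub>m (A + B)) * R * (k \<cdot>\<^sub>m (A + B)) = (k * k) \<cdot>\<^sub>m ((A + B) * R * (A + B))"
    by (simp only: s1 s2 s3 smult_smult_m)
  then show ?thesis by (simp add: e)
qed

lemma hmat_carrier: "length a = n \<Longrightarrow> length b = n \<Longrightarrow> hmat a b \<in> carrier_mat (2^n) (2^n)"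
  by (auto simp: hmat_def)

lemma hmat_herm: assumes "length a = length b" shows "dagger (hmat a b) = hmat a b"
proof -
  have "dagger (pauli a + pauli b) = pauli a + pauli b"
    by (subst dagger_add[of _ "2^length a" "2^length a"]) (use assms in \<open>auto simp: pauli_herm\<close>)
  then show ?thesis by (simp add: hmat_def dagger_smult)
qed

lemma hmat_sym: "length a = length b \<Longrightarrow> hmat a b = hmat b a"
  by (auto simp: hmat_def intro!: eq_matI)

lemma hmat_sq:
  assumes l: "length a = n" "length b = n" and s: "sympl a b"
  shows "hmat a b * hmat a b = 1\<^sub>m (2^n)"
proof -
  let ?k = "complex_of_real (1 / sqrt 2)"
  have "hmat a b * hmat a b = hmat a b * 1\<^sub>m (2^n) * hmat a b" using hmat_carrier[OF l] by simp
  also have "\<dots> = (1/2) \<cdot>\<^sub>m (pauli a * 1\<^sub>m (2^n) * pauli a + pauli a * 1\<^sub>m (2^n) * pauli b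
      + (pauli b * 1\<^sub>m (2^n) * pauli a + pauli b * 1\<^sub>m (2^n) * pauli b))"
    unfolding hmat_def k2[symmetric] using l by (intro sandwich_expand) auto
  also have "\<dots> = (1/2) \<cdot>\<^sub>m (1\<^sub>m (2^n) + pauli a * pauli b + ((-1) \<cdot>\<^sub>m (pauli a * pauli b) + 1\<^sub>m (2^n)))"
    using l s pauli_comm[of b a] by (simp add: pauli_sq sympl_sym sg_def)
  also have "\<dots> = 1\<^sub>m (2^n)"
    using l by (intro eq_matI) auto
  finally show ?thesis .
qed

lemma hmat_conj:
  assumes l: "length a = n" "length b = n" and s: "sympl a b"
  shows "hmat a b * pauli a * hmat a b = pauli b"
proof -
  have "hmat a b * pauli a * hmat a b = (1/2) \<cdot>\<^sub>m (pauli a * pauli a * pauli a + pauli a * pauli a * pauli b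
      + (pauli b * pauli a * pauli a + pauli b * pauli a * pauli b))"
    unfolding hmat_def k2[symmetric] using l by (intro sandwich_expand) auto
  also have "\<dots> = (1/2) \<cdot>\<^sub>m (pauli a + pauli b + (pauli b + (-1) \<cdot>\<^sub>m pauli a))"
    using l s pauli_conj[of a b] by (simp add: pauli_sq assoc' sg_def)
  also have "\<dots> = pauli b"
    using l by (intro eq_matI) auto
  finally show ?thesis .
qed

lemma hmat_cliff_conj:
  assumes l: "length a = n" "length b = n" "length r = n" and s: "sympl a b"
  shows "\<exists>t c. length t = n \<and> hmat a b * pauli r * dagger (hmat a b) = c \<cdot>\<^sub>m pauli t"
proof -
  let ?A = "pauli a" and ?B = "pauli b" and ?R = "pauli r"
  define x where "x = sg (sympl r a)"
  define y where "y = sg (sympl r b)"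
  obtain c1 where c1: "?R * ?A = c1 \<cdot>\<^sub>m pauli (xorl r a)" using pauli_mult[of r a] l by auto
  obtain c2 where c2: "pauli (xorl r a) * ?B = c2 \<cdot>\<^sub>m pauli (xorl (xorl r a) b)" using pauli_mult[of "xorl r a" b] l by auto
  have RAB: "?R * ?A * ?B = (c1 * c2) \<cdot>\<^sub>m pauli (xorl (xorl r a) b)"
    using l by (simp add: c1 c2 smult_mult_l)
  have t1: "?A * ?R * ?A = x \<cdot>\<^sub>m ?R" using pauli_conj[of r a] l by (simp add: x_def)
  have t4: "?B * ?R * ?B = y \<cdot>\<^sub>m ?R" using pauli_conj[of r b] l by (simp add: y_def)
  have t2: "?A * ?R * ?B = x \<cdot>\<^sub>m (?R * ?A * ?B)"
    using pauli_comm[of a r] l by (simp add: x_def sympl_sym smult_mult_l)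
  have t3: "?B * ?R * ?A = (- y) \<cdot>\<^sub>m (?R * ?A * ?B)"
  proof -
    have "?B * ?R * ?A = y \<cdot>\<^sub>m (?R * (?B * ?A))" using pauli_comm[of b r] l
      by (simp add: y_def sympl_sym smult_mult_l assoc')
    also have "?B * ?A = (-1) \<cdot>\<^sub>m (?A * ?B)" using pauli_comm[of b a] l s by (simp add: sympl_sym sg_def)
    finally show ?thesis using l by (simp add: mult_smult_r assoc')
  qed
  have "hmat a b * ?R * dagger (hmat a b) = hmat a b * ?R * hmat a b" using l by (simp add: hmat_herm)
  also have "\<dots> = (1/2) \<cdot>\<^sub>m (x \<cdot>\<^sub>m ?R + x \<cdot>\<^sub>m (?R * ?A * ?B) + ((- y) \<cdot>\<^sub>m (?R * ?A * ?B) + y \<cdot>\<^sub>m ?R))"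
    unfolding hmat_def k2[symmetric] t1[symmetric] t2[symmetric] t3[symmetric] t4[symmetric]
    using l by (intro sandwich_expand) auto
  also have "\<dots> = (1/2) \<cdot>\<^sub>m (x \<cdot>\<^sub>m ?R + (x * c1 * c2) \<cdot>\<^sub>m pauli (xorl (xorl r a) b) + ((- y * c1 * c2) \<cdot>\<^sub>m pauli (xorl (xorl r a) b) + y \<cdot>\<^sub>m ?R))"
    by (simp add: RAB mult.assoc)
  finally have M: "hmat a b * ?R * dagger (hmat a b) = \<dots>" .
  show ?thesis
  proof (cases "x = y")
    case True
    have "hmat a b * ?R * dagger (hmat a b) = x \<cdot>\<^sub>m ?R" unfolding M using l True
      by (intro eq_matI) (auto simp: algebra_simps)
    then show ?thesis using l by blast
  next
    case False
    then have "y = - x" by (cases "sympl r a"; cases "sympl r b") (auto simp: x_def y_def sg_def)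
    then have "hmat a b * ?R * dagger (hmat a b) = (x * c1 * c2) \<cdot>\<^sub>m pauli (xorl (xorl r a) b)" unfolding M using l
      by (intro eq_matI) (auto simp: algebra_simps)
    then show ?thesis using l by (intro exI[of _ "xorl (xorl r a) b"]) auto
  qed
qed

lemma hmat_unitary:
  assumes l: "length a = n" "length b = n" and s: "sympl a b"
  shows "unitary_mat (2^n) (hmat a b)"
  using hmat_carrier[OF l] hmat_herm[of a b] hmat_sq[OF l s] l by (simp add: unitary_mat_def)

lemma hmat_clifford:
  assumes l: "length a = n" "length b = n" and s: "sympl a b"
  shows "clifford n (hmat a b)"
  unfolding clifford_def using hmat_unitary[OF l s] hmat_cliff_conj[OF l _ s]
  by (auto simp: labels_def)


lemma clifford_mult:
  assumes g: "clifford n g" and h: "clifford n h"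
  shows "clifford n (g * h)"
proof -
  have Ug: "unitary_mat (2^n) g" and Uh: "unitary_mat (2^n) h" using g h by (auto simp: clifford_def)
  note Dg = unitaryD[OF Ug] and Dh = unitaryD[OF Uh]
  have gc: "g \<in> carrier_mat (2^n) (2^n)" and hc: "h \<in> carrier_mat (2^n) (2^n)" using Dg Dh by (auto intro: carrier_matI)
  have dg: "dagger (g * h) = dagger h * dagger g" using gc hc by (rule dagger_mult)
  have u1: "dagger (g * h) * (g * h) = 1\<^sub>m (2^n)"
  proof -
    have "dagger h * dagger g * (g * h) = dagger h * (dagger g * (g * h))" using Dg Dh by (simp add: assoc')
    also have "dagger g * (g * h) = h" using Dh by (simp add: unitary_cancelL[OF Ug])
    finally show ?thesis using dg Dh by simp
  qed
  have u2: "(g * h) * dagger (g * h) = 1\<^sub>m (2^n)"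
  proof -
    have "g * h * (dagger h * dagger g) = g * (h * (dagger h * dagger g))" using Dg Dh by (simp add: assoc')
    also have "h * (dagger h * dagger g) = dagger g" using Dg by (simp add: unitary_cancelR[OF Uh])
    finally show ?thesis using dg Dg by simp
  qed
  have U: "unitary_mat (2^n) (g * h)" using u1 u2 gc hc by (simp add: unitary_mat_def)
  have conj: "\<exists>b\<in>labels n. \<exists>c. g * h * pauli a * dagger (g * h) = c \<cdot>\<^sub>m pauli b" if a: "a \<in> labels n" for a
  proof -
    obtain t c where t: "t \<in> labels n" and c: "h * pauli a * dagger h = c \<cdot>\<^sub>m pauli t"
      using h a by (auto simp: clifford_def)
    obtain s c' where s: "s \<in> labels n" and c': "g * pauli t * dagger g = c' \<cdot>\<^sub>m pauli s"
      using g t by (auto simp: clifford_def)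
    have la: "length a = n" "length t = n" using a t by (auto simp: labels_def)
    have "g * h * pauli a * dagger (g * h) = g * (h * pauli a * dagger h) * dagger g"
      using Dg Dh la by (simp add: dg assoc')
    also have "\<dots> = c \<cdot>\<^sub>m (g * pauli t * dagger g)" using Dg la by (simp add: c smult_mult_l mult_smult_r)
    also have "\<dots> = (c * c') \<cdot>\<^sub>m pauli s" by (simp add: c')
    finally show ?thesis using s by blast
  qed
  show ?thesis using U conj by (simp add: clifford_def)
qed

lemma unit_scalar:
  assumes U: "unitary_mat d U" and g: "unitary_mat d g" and e: "U = c \<cdot>\<^sub>m g" and d: "d > 0"
  shows "cnj c * c = 1"
proof -
  note DU = unitaryD[OF U] and Dg = unitaryD[OF g]
  have "1\<^sub>m d = dagger U * U" using DU by simp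
  also have "\<dots> = (cnj c \<cdot>\<^sub>m dagger g) * (c \<cdot>\<^sub>m g)" by (simp add: e dagger_smult)
  also have "\<dots> = (c * cnj c) \<cdot>\<^sub>m (dagger g * g)" using Dg by (simp add: smult_mult_l mult_smult_r)
  also have "\<dots> = (cnj c * c) \<cdot>\<^sub>m 1\<^sub>m d" using Dg by (simp add: mult.commute)
  finally show ?thesis using smult_eq_one d by metis
qed

lemma clifford_carrier: "clifford n g \<Longrightarrow> g \<in> carrier_mat (2^n) (2^n)"
  by (simp add: clifford_def unitary_mat_def)

definition rep :: "complex mat set \<Rightarrow> complex mat \<Rightarrow> complex mat" where
  "rep G U = (THE g. g \<in> G \<and> (\<exists>c. U = c \<cdot>\<^sub>m g))"

lemma rep_prop:
  assumes "clifford_transversal n G" "clifford n U"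
  shows "rep G U \<in> G \<and> (\<exists>c. U = c \<cdot>\<^sub>m rep G U)"
proof -
  have "\<exists>!g. g \<in> G \<and> (\<exists>c. U = c \<cdot>\<^sub>m g)" using assms by (auto simp: clifford_transversal_def)
  then show ?thesis unfolding rep_def by (rule theI')
qed

lemma transversal_unique:
  assumes T: "clifford_transversal n G" and g1: "g1 \<in> G" and g2: "g2 \<in> G" and e: "g1 = c \<cdot>\<^sub>m g2"
  shows "g1 = g2"
proof -
  have "clifford n g1" using T g1 by (auto simp: clifford_transversal_def)
  then have "\<exists>!g. g \<in> G \<and> (\<exists>c. g1 = c \<cdot>\<^sub>m g)" using T by (auto simp: clifford_transversal_def)
  moreover have "g1 \<in> G \<and> (\<exists>c. g1 = c \<cdot>\<^sub>m g1)" using g1 by (auto intro: exI[of _ 1])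
  moreover have "g2 \<in> G \<and> (\<exists>c. g1 = c \<cdot>\<^sub>m g2)" using g2 e by auto
  ultimately show ?thesis by blast
qed

definition SS :: "nat \<Rightarrow> complex mat set \<Rightarrow> plabel \<Rightarrow> (bool list \<times> complex mat) set" where
  "SS n G a = (SIGMA w:{w. length w = n}. {g\<in>G. Xi n w g = a})"

lemma SS_finite: "finite G \<Longrightarrow> finite (SS n G a)"
  unfolding SS_def by (intro finite_SigmaI) auto

lemma count_le:
  assumes T: "clifford_transversal n G" and fin: "finite G"
    and l: "length a = n" "length b = n" and s: "sympl a b"
  shows "card (SS n G a) \<le> card (SS n G b)"
proof -
  define h where "h = hmat a b"
  have hC: "clifford n h" using hmat_clifford[OF l s] by (simp add: h_def)
  have Uh: "unitary_mat (2^n) h" using hC by (simp add: clifford_def)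
  note Dh = unitaryD[OF Uh]
  have hh: "dagger h = h" using l by (simp add: h_def hmat_herm)
  have hsq: "h * h = 1\<^sub>m (2^n)" using hmat_sq[OF l s] by (simp add: h_def)
  have hab: "h * pauli a * h = pauli b" using hmat_conj[OF l s] by (simp add: h_def)
  have gC: "clifford n g" if "g \<in> G" for g using T that by (auto simp: clifford_transversal_def)
  have rp: "rep G (g * h) \<in> G \<and> (\<exists>c. g * h = c \<cdot>\<^sub>m rep G (g * h))" if "g \<in> G" for g
    using rep_prop[OF T clifford_mult[OF gC[OF that] hC]] .
  have cu: "cnj c * c = 1" if "g \<in> G" "g * h = c \<cdot>\<^sub>m rep G (g * h)" for g c
  proof (rule unit_scalar[OF _ _ that(2)])
    show "unitary_mat (2^n) (g * h)" using clifford_mult[OF gC[OF that(1)] hC] by (simp add: clifford_def)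
    show "unitary_mat (2^n) (rep G (g * h))" using gC rp[OF that(1)] by (simp add: clifford_def)
  qed simp
  define f where "f x = (fst x, rep G (snd x * h))" for x :: "bool list \<times> complex mat"
  have inj: "inj_on f (SS n G a)"
  proof (rule inj_onI)
    fix x y assume x: "x \<in> SS n G a" and y: "y \<in> SS n G a" and fe: "f x = f y"
    obtain w1 g1 where xw: "x = (w1, g1)" by force
    obtain w2 g2 where yw: "y = (w2, g2)" by force
    have g1: "g1 \<in> G" and g2: "g2 \<in> G" using x y xw yw by (auto simp: SS_def)
    have w: "w1 = w2" and r: "rep G (g1 * h) = rep G (g2 * h)" using fe xw yw by (auto simp: f_def)
    define g' where "g' = rep G (g1 * h)"
    obtain c1 where c1: "g1 * h = c1 \<cdot>\<^sub>m g'" using rp[OF g1] by (auto simp: g'_def)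
    obtain c2 where c2: "g2 * h = c2 \<cdot>\<^sub>m g'" using rp[OF g2] r by (auto simp: g'_def)
    have g'2: "g' = rep G (g2 * h)" using r by (simp add: g'_def)
    have "g2 * h = c2 \<cdot>\<^sub>m rep G (g2 * h)" by (subst g'2[symmetric]) (rule c2)
    then have "cnj c2 * c2 = 1" by (rule cu[OF g2])
    then have c2nz: "c2 \<noteq> 0" by auto
    have g'c: "g' \<in> carrier_mat (2^n) (2^n)" using clifford_carrier gC rp[OF g1] by (simp add: g'_def)
    have g1c: "g1 \<in> carrier_mat (2^n) (2^n)" "g2 \<in> carrier_mat (2^n) (2^n)"
      using clifford_carrier gC g1 g2 by auto
    have bk: "gg = gg * h * h" if "gg \<in> carrier_mat (2^n) (2^n)" for gg
      using that Dh by (simp add: assoc' hsq)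
    have gh: "(c \<cdot>\<^sub>m g') * h = c \<cdot>\<^sub>m (g' * h)" for c by (rule smult_mult_l) (use g'c Dh in simp)
    have e1: "g1 = c1 \<cdot>\<^sub>m (g' * h)"
    proof -
      have "g1 = g1 * h * h" by (rule bk[OF g1c(1)])
      also have "\<dots> = c1 \<cdot>\<^sub>m (g' * h)" by (simp only: c1 gh)
      finally show ?thesis .
    qed
    have e2: "g2 = c2 \<cdot>\<^sub>m (g' * h)"
    proof -
      have "g2 = g2 * h * h" by (rule bk[OF g1c(2)])
      also have "\<dots> = c2 \<cdot>\<^sub>m (g' * h)" by (simp only: c2 gh)
      finally show ?thesis .
    qed
    then have "g' * h = (1/c2) \<cdot>\<^sub>m g2" using c2nz by simp
    then have "g1 = (c1 / c2) \<cdot>\<^sub>m g2" using e1 by simp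
    then have "g1 = g2" using transversal_unique[OF T g1 g2] by blast
    then show "x = y" using xw yw w by simp
  qed
  have img: "f ` SS n G a \<subseteq> SS n G b"
  proof
    fix y assume "y \<in> f ` SS n G a"
    then obtain w g where wg: "(w, g) \<in> SS n G a" and y: "y = (w, rep G (g * h))" by (auto simp: f_def)
    have g: "g \<in> G" and w: "length w = n" and Xa: "Xi n w g = a" using wg by (auto simp: SS_def)
    define g' where "g' = rep G (g * h)"
    obtain c where c: "g * h = c \<cdot>\<^sub>m g'" using rp[OF g] by (auto simp: g'_def)
    have cc: "cnj c * c = 1" using cu[OF g c[unfolded g'_def]] .
    then have cnz: "c \<noteq> 0" by auto
    have g'G: "g' \<in> G" using rp[OF g] by (simp add: g'_def)
    have Ug: "unitary_mat (2^n) g" using gC[OF g] by (simp add: clifford_def)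
    note Dg = unitaryD[OF Ug]
    obtain e where e: "e = 1 \<or> e = -1" "dagger g * Zop w * g = e \<cdot>\<^sub>m pauli a"
      using Xi_prop[OF gC[OF g] w] Xa by auto
    have g'e: "g' = (1/c) \<cdot>\<^sub>m (g * h)" using c cnz by simp
    have "dagger g' * Zop w * g' = (1 / (c * cnj c)) \<cdot>\<^sub>m (dagger (g * h) * Zop w * (g * h))"
      using Dg Dh w by (simp add: g'e dagger_smult smult_mult_l mult_smult_r)
    also have "1 / (c * cnj c) = 1" using cc by (simp add: mult.commute)
    also have "dagger (g * h) * Zop w * (g * h) = dagger h * (dagger g * Zop w * g) * h"
    proof -
      have "dagger (g * h) = dagger h * dagger g"
        by (rule dagger_mult[of _ "2^n" "2^n" _ "2^n"]) (use Dg Dh in \<open>auto intro: carrier_matI\<close>)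
      then show ?thesis using Dg Dh w by (simp add: assoc')
    qed
    also have "\<dots> = e \<cdot>\<^sub>m (h * pauli a * h)" using Dh l by (simp add: e hh smult_mult_l mult_smult_r)
    also have "\<dots> = e \<cdot>\<^sub>m pauli b" by (simp add: hab)
    finally have "Xi n w g' = b" using Xi_eq[OF l(2) e(1)] by simp
    then show "y \<in> SS n G b" using y g'G w by (simp add: SS_def g'_def)
  qed
  show ?thesis by (rule card_inj_on_le[OF inj img SS_finite[OF fin]])
qed


lemma zero_label_Suc: "zero_label (Suc n) = (False,False) # zero_label n"
  by (simp add: zero_label_def)

lemma length_zero_label[simp]: "length (zero_label n) = n" by (simp add: zero_label_def)

lemma anti1_zero[simp]: "anti1 p (False,False) = False" "anti1 (False,False) p = False"
  by (auto simp: anti1_def)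

lemma sympl_zero: "length a = n \<Longrightarrow> sympl a (zero_label n) = False"
  by (induction a arbitrary: n) (auto simp: zero_label_Suc)

lemma sympl_single: "length a = n \<Longrightarrow> k < n \<Longrightarrow> sympl a ((zero_label n)[k := u]) = anti1 (a!k) u"
proof (induction a arbitrary: n k)
  case Nil then show ?case by simp
next
  case (Cons p a)
  then obtain n' where n: "n = Suc n'" and l: "length a = n'" by auto
  show ?case
  proof (cases k)
    case 0 then show ?thesis using n l by (simp add: zero_label_Suc sympl_zero)
  next
    case (Suc k') then show ?thesis using n l Cons by (simp add: zero_label_Suc)
  qed
qed

lemma anti1_xor: "anti1 p (xor1 q q') = (anti1 p q \<noteq> anti1 p q')"
  by (cases p; cases q; cases q') (auto simp: anti1_def xor1_def)

lemma sympl_xorl: "length a = length r1 \<Longrightarrow> length r1 = length r2 \<Longrightarrow> sympl a (xorl r1 r2) = (sympl a r1 \<noteq> sympl a r2)"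
proof (induction r1 r2 arbitrary: a rule: xorl.induct)
  case (1 p r1 p' r2)
  then obtain q a' where a: "a = q # a'" by (cases a) auto
  then show ?case using 1 by (auto simp: anti1_xor)
qed auto

lemma anti_exists1': "p \<noteq> (False,False) \<Longrightarrow> q \<noteq> (False,False) \<Longrightarrow>
   \<exists>u\<in>{(False,True),(True,False),(True,True)}. anti1 p u \<and> anti1 q u"
  by (cases p; cases q) (simp add: anti1_def; argo)

lemma anti_exists1: "p \<noteq> (False,False) \<Longrightarrow> q \<noteq> (False,False) \<Longrightarrow> \<exists>u. anti1 p u \<and> anti1 q u"
  using anti_exists1' by blast

lemma anti_exists0: "p \<noteq> (False,False) \<Longrightarrow> \<exists>u. anti1 p u"
  using anti_exists1 by blast

lemma nonzero_nth: "\<not> is_zero a \<Longrightarrow> \<exists>i<length a. a!i \<noteq> (False,False)"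
  by (auto simp: is_zero_def in_set_conv_nth)

lemma exists_anti:
  assumes la: "length a = n" and lb: "length b = n" and a: "\<not> is_zero a" and b: "\<not> is_zero b"
  shows "\<exists>r. length r = n \<and> sympl a r \<and> sympl b r"
proof (cases "\<exists>k<n. a!k \<noteq> (False,False) \<and> b!k \<noteq> (False,False)")
  case True
  then obtain k where k: "k < n" "a!k \<noteq> (False,False)" "b!k \<noteq> (False,False)" by auto
  obtain u where u: "anti1 (a!k) u" "anti1 (b!k) u" using anti_exists1[OF k(2,3)] by auto
  show ?thesis
    by (rule exI[of _ "(zero_label n)[k := u]"]) (use la lb k u in \<open>simp add: sympl_single\<close>)
next
  case False
  obtain i where i: "i < n" "a!i \<noteq> (False,False)" using nonzero_nth[OF a] la by auto
  obtain j where j: "j < n" "b!j \<noteq> (False,False)" using nonzero_nth[OF b] lb by auto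
  have bi: "b!i = (False,False)" using False i by auto
  have aj: "a!j = (False,False)" using False j by auto
  obtain u where u: "anti1 (a!i) u" using anti_exists0[OF i(2)] by auto
  obtain v where v: "anti1 (b!j) v" using anti_exists0[OF j(2)] by auto
  define r where "r = xorl ((zero_label n)[i := u]) ((zero_label n)[j := v])"
  have "length r = n" by (simp add: r_def)
  moreover have "sympl a r" using la i j u aj by (simp add: r_def sympl_xorl sympl_single)
  moreover have "sympl b r" using lb i j v bi by (simp add: r_def sympl_xorl sympl_single)
  ultimately show ?thesis by blast
qed


section \<open>Counting\<close>

lemma count_eq_anti:
  assumes T: "clifford_transversal n G" and fin: "finite G"
    and l: "length a = n" "length b = n" and s: "sympl a b"
  shows "card (SS n G a) = card (SS n G b)"
proof -
  have "sympl b a" using s l sympl_sym[of a b] by simp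
  then show ?thesis using count_le[OF T fin l s] count_le[OF T fin l(2) l(1)] by simp
qed

lemma count_eq_nonzero:
  assumes T: "clifford_transversal n G" and fin: "finite G"
    and l: "length a = n" "length b = n" and nz: "\<not> is_zero a" "\<not> is_zero b"
  shows "card (SS n G a) = card (SS n G b)"
proof -
  obtain r where r: "length r = n" "sympl a r" "sympl b r" using exists_anti[OF l nz] by auto
  show ?thesis using count_eq_anti[OF T fin l(1) r(1,2)] count_eq_anti[OF T fin l(2) r(1,3)] by simp
qed

lemma card_SS: "finite G \<Longrightarrow> card (SS n G a) = (\<Sum>w\<in>{w. length w = n}. card {g\<in>G. Xi n w g = a})"
  unfolding SS_def by (rule card_SigmaI) simp_all

lemma card_filter: "finite G \<Longrightarrow> card {g\<in>G. P g} = (\<Sum>g\<in>G. if P g then 1 else 0)"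
  unfolding card_eq_sum by (rule sum.inter_filter)

lemma count_total:
  assumes T: "clifford_transversal n G" and fin: "finite G"
  shows "(\<Sum>a\<in>labels n. card (SS n G a)) = 2^n * card G"
proof -
  have gC: "clifford n g" if "g \<in> G" for g using T that by (auto simp: clifford_transversal_def)
  have inner: "(\<Sum>a\<in>labels n. card {g\<in>G. Xi n w g = a}) = card G" if w: "length w = n" for w
  proof -
    have "(\<Sum>a\<in>labels n. card {g\<in>G. Xi n w g = a}) = (\<Sum>a\<in>labels n. \<Sum>g\<in>G. if Xi n w g = a then 1 else 0)"
      using fin by (simp add: card_filter)
    also have "\<dots> = (\<Sum>g\<in>G. \<Sum>a\<in>labels n. if Xi n w g = a then 1 else 0)" by (rule sum.swap)
    also have "\<dots> = (\<Sum>g\<in>G. 1)"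
    proof (rule sum.cong[OF refl])
      fix g assume g: "g \<in> G"
      have "Xi n w g \<in> labels n" using Xi_prop[OF gC[OF g] w] by (simp add: labels_def)
      then show "(\<Sum>a\<in>labels n. if Xi n w g = a then 1 else 0) = (1::nat)"
        by (simp add: labels_def)
    qed
    finally show ?thesis by simp
  qed
  have "(\<Sum>a\<in>labels n. card (SS n G a)) = (\<Sum>a\<in>labels n. \<Sum>w\<in>{w. length w = n}. card {g\<in>G. Xi n w g = a})"
    using fin by (simp add: card_SS)
  also have "\<dots> = (\<Sum>w\<in>{w. length w = n}. \<Sum>a\<in>labels n. card {g\<in>G. Xi n w g = a})" by (rule sum.swap)
  also have "\<dots> = (\<Sum>w\<in>{w :: bool list. length w = n}. card G)" by (rule sum.cong[OF refl]) (simp add: inner)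
  also have "\<dots> = 2^n * card G" by (simp add: card_len)
  finally show ?thesis .
qed

lemma count_zero:
  assumes T: "clifford_transversal n G" and fin: "finite G"
  shows "card (SS n G (zero_label n)) = card G"
proof -
  have gC: "clifford n g" if "g \<in> G" for g using T that by (auto simp: clifford_transversal_def)
  have "{g\<in>G. Xi n w g = zero_label n} = (if w = replicate n False then G else {})" if w: "length w = n" for w
  proof -
    have "Xi n w g = zero_label n \<longleftrightarrow> w = replicate n False" if g: "g \<in> G" for g
      using Xi_zero[OF gC[OF g] w] Xi_prop[OF gC[OF g] w] by (simp add: is_zero_iff)
    then show ?thesis by auto
  qed
  then have "card (SS n G (zero_label n)) = (\<Sum>w\<in>{w. length w = n}. if w = replicate n False then card G else 0)"
    using fin unfolding card_SS[OF fin] by (intro sum.cong) auto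
  also have "\<dots> = card G" by (simp add: sum.delta')
  finally show ?thesis .
qed

lemma count_value:
  assumes T: "clifford_transversal n G" and fin: "finite G" and n: "n \<ge> 1"
    and l: "length a = n" and nz: "\<not> is_zero a"
  shows "(2^n + 1) * card (SS n G a) = card G"
proof -
  let ?L = "labels n" and ?N = "card (SS n G a)"
  have z: "zero_label n \<in> ?L" by (simp add: labels_def)
  have finL: "finite ?L" by (simp add: labels_def)
  have cL: "card ?L = 4^n" using card_len[where 'a="bool \<times> bool" and n=n] by (simp add: labels_def)
  have "(\<Sum>b\<in>?L - {zero_label n}. card (SS n G b)) = (\<Sum>b\<in>?L - {zero_label n}. ?N)"
  proof (rule sum.cong[OF refl])
    fix b assume "b \<in> ?L - {zero_label n}"
    then have lb: "length b = n" and nb: "\<not> is_zero b" by (auto simp: labels_def is_zero_iff)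
    show "card (SS n G b) = ?N" using count_eq_nonzero[OF T fin lb l nb nz] .
  qed
  also have "\<dots> = (4^n - 1) * ?N" using finL z cL by simp
  finally have rest: "(\<Sum>b\<in>?L - {zero_label n}. card (SS n G b)) = (4^n - 1) * ?N" .
  have "2^n * card G = card G + (4^n - 1) * ?N"
    using count_total[OF T fin] sum.remove[OF finL z, of "\<lambda>b. card (SS n G b)"] rest count_zero[OF T fin] by simp
  then have eqA: "(2^n - 1) * card G = (4^n - 1) * ?N" by (simp add: diff_mult_distrib)
  have eqB: "(4::nat)^n - 1 = (2^n - 1) * (2^n + 1)"
  proof -
    have "(4::nat)^n = 2^n * 2^n" by (simp add: power_mult_distrib[symmetric])
    moreover have "(x - 1) * (x + 1) = x * x - (1::nat)" for x by (cases x) auto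
    ultimately show ?thesis by simp
  qed
  have "(1::nat) < 2^n" using n by (intro one_less_power) auto
  then have pos: "(2::nat)^n - 1 \<noteq> 0" by simp
  have "(2^n - 1) * card G = (2^n - 1) * ((2^n + 1) * ?N)" using eqA unfolding eqB by (simp only: mult.assoc)
  then show ?thesis using pos by simp
qed


section \<open>Channel\<close>

definition lam :: "nat \<Rightarrow> (plabel \<Rightarrow> real) \<Rightarrow> plabel \<Rightarrow> complex" where
  "lam n q a = (\<Sum>b\<in>labels n. complex_of_real (q b) * sg (sympl a b))"

lemma finite_labels[simp]: "finite (labels n)" by (simp add: labels_def)

lemma mtrace_mult_mat:
  assumes A: "A \<in> carrier_mat d d"
  shows "mtrace (A * mat d d f) = (\<Sum>i<d. \<Sum>l<d. A $$ (i,l) * f (l,i))"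
  unfolding mtrace_def using A by (auto simp: mult_entry[OF A mat_carrier] intro!: sum.cong)

lemma mtrace_mult_entries:
  assumes A: "A \<in> carrier_mat d d" and M: "M \<in> carrier_mat d d"
  shows "mtrace (A * M) = (\<Sum>i<d. \<Sum>l<d. A $$ (i,l) * M $$ (l,i))"
  unfolding mtrace_def using A M by (auto simp: mult_entry intro!: sum.cong)

lemma mtrace_mat_sum:
  assumes A: "A \<in> carrier_mat d d" and M: "\<And>b. b \<in> B \<Longrightarrow> M b \<in> carrier_mat d d"
  shows "mtrace (A * mat d d (\<lambda>(i,j). \<Sum>b\<in>B. c b * M b $$ (i,j))) = (\<Sum>b\<in>B. c b * mtrace (A * M b))"
proof -
  have "mtrace (A * mat d d (\<lambda>(i,j). \<Sum>b\<in>B. c b * M b $$ (i,j))) = (\<Sum>i<d. \<Sum>l<d. A $$ (i,l) * (\<Sum>b\<in>B. c b * M b $$ (l,i)))"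
    using A by (simp add: mtrace_mult_mat)
  also have "\<dots> = (\<Sum>i<d. \<Sum>l<d. \<Sum>b\<in>B. c b * (A $$ (i,l) * M b $$ (l,i)))"
    by (simp add: sum_distrib_left mult.left_commute)
  also have "\<dots> = (\<Sum>i<d. \<Sum>b\<in>B. \<Sum>l<d. c b * (A $$ (i,l) * M b $$ (l,i)))"
    by (rule sum.cong[OF refl], rule sum.swap)
  also have "\<dots> = (\<Sum>b\<in>B. \<Sum>i<d. \<Sum>l<d. c b * (A $$ (i,l) * M b $$ (l,i)))"
    by (rule sum.swap)
  also have "\<dots> = (\<Sum>b\<in>B. c b * (\<Sum>i<d. \<Sum>l<d. A $$ (i,l) * M b $$ (l,i)))"
    by (simp add: sum_distrib_left)
  also have "\<dots> = (\<Sum>b\<in>B. c b * mtrace (A * M b))"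
    using A M by (simp add: mtrace_mult_entries)
  finally show ?thesis .
qed

lemma channel_carrier: "pauli_channel n q \<rho> \<in> carrier_mat (2^n) (2^n)"
  by (simp add: pauli_channel_def)

lemma channel_trace:
  assumes a: "length a = n" and rho: "\<rho> \<in> carrier_mat (2^n) (2^n)"
  shows "mtrace (pauli a * pauli_channel n q \<rho>) = lam n q a * mtrace (pauli a * \<rho>)"
proof -
  have "mtrace (pauli a * pauli_channel n q \<rho>) = (\<Sum>b\<in>labels n. complex_of_real (q b) * mtrace (pauli a * (pauli b * \<rho> * pauli b)))"
    unfolding pauli_channel_def using a rho
    by (intro mtrace_mat_sum) (auto simp: labels_def)
  also have "\<dots> = (\<Sum>b\<in>labels n. complex_of_real (q b) * (sg (sympl a b) * mtrace (pauli a * \<rho>)))"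
  proof (rule sum.cong[OF refl])
    fix b assume "b \<in> labels n"
    then have b: "length b = n" by (simp add: labels_def)
    have "mtrace (pauli a * (pauli b * \<rho> * pauli b)) = mtrace ((pauli a * pauli b * \<rho>) * pauli b)"
      using a b rho by (simp add: assoc')
    also have "\<dots> = mtrace (pauli b * (pauli a * pauli b * \<rho>))"
      using a b rho by (intro mtrace_mult_comm[of _ "2^n" "2^n"]) auto
    also have "\<dots> = mtrace ((pauli b * pauli a * pauli b) * \<rho>)"
      using a b rho by (simp add: assoc')
    also have "\<dots> = sg (sympl a b) * mtrace (pauli a * \<rho>)"
      using a b rho by (simp add: pauli_conj smult_mult_l mtrace_smult)
    finally show "complex_of_real (q b) * mtrace (pauli a * (pauli b * \<rho> * pauli b)) =
        complex_of_real (q b) * (sg (sympl a b) * mtrace (pauli a * \<rho>))" by simp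
  qed
  also have "\<dots> = lam n q a * mtrace (pauli a * \<rho>)"
    by (simp add: lam_def sum_distrib_right mult.assoc)
  finally show ?thesis .
qed

lemma channel_pauli:
  assumes a: "length a = n"
  shows "pauli_channel n q (pauli a) = lam n q a \<cdot>\<^sub>m pauli a"
proof (rule eq_matI)
  fix i j assume ij: "i < dim_row (lam n q a \<cdot>\<^sub>m pauli a)" "j < dim_col (lam n q a \<cdot>\<^sub>m pauli a)"
  then have ij': "i < 2^n" "j < 2^n" using a by auto
  have "pauli_channel n q (pauli a) $$ (i,j) = (\<Sum>b\<in>labels n. complex_of_real (q b) * (pauli b * pauli a * pauli b) $$ (i,j))"
    using ij' by (simp add: pauli_channel_def)
  also have "\<dots> = (\<Sum>b\<in>labels n. complex_of_real (q b) * (sg (sympl a b) * pauli a $$ (i,j)))"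
    using a ij' by (intro sum.cong refl) (auto simp: labels_def pauli_conj)
  also have "\<dots> = (lam n q a \<cdot>\<^sub>m pauli a) $$ (i,j)"
    using a ij' by (simp add: lam_def sum_distrib_right mult.assoc)
  finally show "pauli_channel n q (pauli a) $$ (i,j) = (lam n q a \<cdot>\<^sub>m pauli a) $$ (i,j)" .
qed (use a in \<open>auto simp: pauli_channel_def\<close>)

lemma pauli_eig_lam:
  assumes a: "length a = n"
  shows "pauli_eig n q a = lam n q a"
  unfolding pauli_eig_def
proof (rule the_equality)
  show "pauli_channel n q (pauli a) = lam n q a \<cdot>\<^sub>m pauli a" by (rule channel_pauli[OF a])
next
  fix c assume "pauli_channel n q (pauli a) = c \<cdot>\<^sub>m pauli a"
  then have e: "c \<cdot>\<^sub>m pauli a = lam n q a \<cdot>\<^sub>m pauli a" using channel_pauli[OF a] by simp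
  have t1: "mtrace (pauli a * (c \<cdot>\<^sub>m pauli a)) = c * 2^n" using a by (simp add: mult_smult_r mtrace_smult pauli_sq)
  have t2: "mtrace (pauli a * (lam n q a \<cdot>\<^sub>m pauli a)) = lam n q a * 2^n" using a by (simp add: mult_smult_r mtrace_smult pauli_sq)
  have "c * 2^n = lam n q a * 2^n" using t1 t2 unfolding e by simp
  then show "c = lam n q a" by simp
qed

lemma lam_zero:
  assumes "prob_vector n q"
  shows "lam n q (zero_label n) = 1"
proof -
  have "lam n q (zero_label n) = (\<Sum>b\<in>labels n. complex_of_real (q b))"
    unfolding lam_def
  proof (intro sum.cong refl)
    fix b assume "b \<in> labels n"
    then have "length b = n" by (simp add: labels_def)
    then have "sympl (zero_label n) b = False" using sympl_sym[of "zero_label n" b] sympl_zero[of b n] by simp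
    then show "complex_of_real (q b) * sg (sympl (zero_label n) b) = complex_of_real (q b)" by (simp add: sg_def)
  qed
  also have "\<dots> = complex_of_real (\<Sum>b\<in>labels n. q b)" by simp
  also have "\<dots> = 1" using assms by (simp add: prob_vector_def)
  finally show ?thesis .
qed


lemma mtrace_Z:
  assumes A: "A \<in> carrier_mat (2^length w) (2^length w)"
  shows "mtrace (Zop w * A) = (\<Sum>i<2^length w. zs w i * A $$ (i,i))"
proof -
  have "mtrace (Zop w * A) = (\<Sum>i<2^length w. \<Sum>l<2^length w. Zop w $$ (i,l) * A $$ (l,i))"
    using A by (intro mtrace_mult_entries) auto
  also have "\<dots> = (\<Sum>i<2^length w. \<Sum>l<2^length w. if i = l then zs w i * A $$ (l,i) else 0)"
    by (intro sum.cong refl) (simp add: Zop_index)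
  also have "\<dots> = (\<Sum>i<2^length w. zs w i * A $$ (i,i))"
    by (intro sum.cong refl) (simp add: sum.delta)
  finally show ?thesis .
qed

lemma parseval:
  assumes A: "A \<in> carrier_mat (2^n) (2^n)" and B: "B \<in> carrier_mat (2^n) (2^n)"
  shows "(\<Sum>w\<in>{w. length w = n}. mtrace (Zop w * A) * mtrace (Zop w * B)) = 2^n * (\<Sum>x<2^n. A $$ (x,x) * B $$ (x,x))"
proof -
  let ?W = "{w :: bool list. length w = n}"
  have "(\<Sum>w\<in>?W. mtrace (Zop w * A) * mtrace (Zop w * B)) =
        (\<Sum>w\<in>?W. \<Sum>i<2^n. \<Sum>j<2^n. (A $$ (i,i) * B $$ (j,j)) * (zs w i * zs w j))"
  proof (rule sum.cong[OF refl])
    fix w assume "w \<in> ?W"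
    then have w: "length w = n" by simp
    show "mtrace (Zop w * A) * mtrace (Zop w * B) = (\<Sum>i<2^n. \<Sum>j<2^n. (A $$ (i,i) * B $$ (j,j)) * (zs w i * zs w j))"
      using A B w by (simp add: mtrace_Z sum_product algebra_simps)
  qed
  also have "\<dots> = (\<Sum>i<2^n. \<Sum>w\<in>?W. \<Sum>j<2^n. (A $$ (i,i) * B $$ (j,j)) * (zs w i * zs w j))"
    by (rule sum.swap)
  also have "\<dots> = (\<Sum>i<2^n. \<Sum>j<2^n. \<Sum>w\<in>?W. (A $$ (i,i) * B $$ (j,j)) * (zs w i * zs w j))"
    by (rule sum.cong[OF refl], rule sum.swap)
  also have "\<dots> = (\<Sum>i<2^n. \<Sum>j<2^n. (A $$ (i,i) * B $$ (j,j)) * (if i = j then 2^n else 0))"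
    by (intro sum.cong refl) (simp add: sum_distrib_left[symmetric] zs_orth)
  also have "\<dots> = (\<Sum>i<2^n. 2^n * (A $$ (i,i) * B $$ (i,i)))"
    by (intro sum.cong refl) (simp add: if_distrib sum.delta' mult.commute cong: if_cong)
  also have "\<dots> = 2^n * (\<Sum>x<2^n. A $$ (x,x) * B $$ (x,x))" by (simp add: sum_distrib_left)
  finally show ?thesis .
qed

lemma Ebasis_carrier[simp]: "Ebasis n x \<in> carrier_mat (2^n) (2^n)"
  by (simp add: Ebasis_def)

lemma Ebasis_dagger: "dagger (Ebasis n x) = Ebasis n x"
  by (rule eq_matI) (auto simp: Ebasis_def)

lemma mtrace_Ebasis:
  assumes x: "x < 2^n" and M: "M \<in> carrier_mat (2^n) (2^n)"
  shows "mtrace (Ebasis n x * M) = M $$ (x,x)"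
proof -
  have "mtrace (Ebasis n x * M) = (\<Sum>i<2^n. \<Sum>l<2^n. Ebasis n x $$ (i,l) * M $$ (l,i))"
    using M by (intro mtrace_mult_entries) auto
  also have "\<dots> = (\<Sum>i<2^n. if i = x then M $$ (x,x) else 0)"
  proof (intro sum.cong refl)
    fix i :: nat assume i: "i \<in> {..<2^n}"
    have "(\<Sum>l<2^n. Ebasis n x $$ (i,l) * M $$ (l,i)) = (\<Sum>l<2^n. if l = x then (if i = x then M $$ (l,i) else 0) else 0)"
      using i x by (intro sum.cong refl) (auto simp: Ebasis_def)
    also have "\<dots> = (if i = x then M $$ (x,x) else 0)" using x by (simp add: sum.delta)
    finally show "(\<Sum>l<2^n. Ebasis n x $$ (i,l) * M $$ (l,i)) = (if i = x then M $$ (x,x) else 0)" .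
  qed
  also have "\<dots> = M $$ (x,x)" using x by (simp add: sum.delta')
  finally show ?thesis .
qed

lemma braket_eval:
  assumes x: "x < 2^n" and M: "X (Ebasis n 0) \<in> carrier_mat (2^n) (2^n)"
  shows "braket (Ebasis n x) X (Ebasis n 0) = X (Ebasis n 0) $$ (x,x)"
  unfolding braket_def Ebasis_dagger using mtrace_Ebasis[OF x M] .

lemma mtrace_E0:
  assumes M: "M \<in> carrier_mat (2^n) (2^n)"
  shows "mtrace (M * Ebasis n 0) = M $$ (0,0)"
proof -
  have "mtrace (M * Ebasis n 0) = mtrace (Ebasis n 0 * M)"
    using M by (intro mtrace_mult_comm) auto
  also have "\<dots> = M $$ (0,0)" using M by (intro mtrace_Ebasis) auto
  finally show ?thesis .
qed

lemma mtrace_Z_conj: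
  assumes g: "clifford n g" and w: "length w = n" and rho: "\<rho> \<in> carrier_mat (2^n) (2^n)"
  shows "\<exists>e. (e = 1 \<or> e = -1) \<and> mtrace (Zop w * (g * \<rho> * dagger g)) = e * mtrace (pauli (Xi n w g) * \<rho>)"
proof -
  obtain e where e: "e = 1 \<or> e = -1" "dagger g * Zop w * g = e \<cdot>\<^sub>m pauli (Xi n w g)"
    and l: "length (Xi n w g) = n" using Xi_prop[OF g w] by auto
  have U: "unitary_mat (2^n) g" using g by (simp add: clifford_def)
  note D = unitaryD[OF U]
  have "mtrace (Zop w * (g * \<rho> * dagger g)) = mtrace ((Zop w * g * \<rho>) * dagger g)"
    using D rho w by (simp add: assoc')
  also have "\<dots> = mtrace (dagger g * (Zop w * g * \<rho>))"
    using D rho w by (intro mtrace_mult_comm[of _ "2^n" "2^n"]) (auto intro: carrier_matI)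
  also have "\<dots> = mtrace ((dagger g * Zop w * g) * \<rho>)"
    using D rho w by (simp add: assoc')
  also have "\<dots> = e * mtrace (pauli (Xi n w g) * \<rho>)"
    using rho l by (simp add: e smult_mult_l mtrace_smult)
  finally show ?thesis using e by blast
qed


lemma mtrace_Z_conj':
  assumes g: "clifford n g" and w: "length w = n" and rho: "\<rho> \<in> carrier_mat (2^n) (2^n)"
    and e: "dagger g * Zop w * g = e \<cdot>\<^sub>m pauli (Xi n w g)" and l: "length (Xi n w g) = n"
  shows "mtrace (Zop w * (g * \<rho> * dagger g)) = e * mtrace (pauli (Xi n w g) * \<rho>)"
proof -
  have U: "unitary_mat (2^n) g" using g by (simp add: clifford_def)
  note D = unitaryD[OF U]
  have "mtrace (Zop w * (g * \<rho> * dagger g)) = mtrace ((Zop w * g * \<rho>) * dagger g)"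
    using D rho w by (simp add: assoc')
  also have "\<dots> = mtrace (dagger g * (Zop w * g * \<rho>))"
    using D rho w by (intro mtrace_mult_comm[of _ "2^n" "2^n"]) (auto intro: carrier_matI)
  also have "\<dots> = mtrace ((dagger g * Zop w * g) * \<rho>)"
    using D rho w by (simp add: assoc')
  also have "\<dots> = e * mtrace (pauli (Xi n w g) * \<rho>)"
    using rho l by (simp add: e smult_mult_l mtrace_smult)
  finally show ?thesis .
qed

definition Fg :: "nat \<Rightarrow> (plabel \<Rightarrow> real) \<Rightarrow> complex mat \<Rightarrow> complex" where
  "Fg n q g = (\<Sum>w\<in>{w. length w = n}. if Xi n w g \<in> diag_labels n - {zero_label n} then lam n q (Xi n w g) else 0)"

lemma diag_iff: "length a = n \<Longrightarrow> a \<in> diag_labels n \<longleftrightarrow> (\<forall>p\<in>set a. \<not> snd p)"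
  unfolding diag_labels_def by (auto simp: prod_eq_iff)

lemma per_g:
  assumes n: "n \<ge> 1" and g: "clifford n g" and q: "prob_vector n q"
  shows "(\<Sum>x<2^n. braket (Ebasis n x) (\<lambda>\<rho>. omega g (pauli_channel n q \<rho>)) (Ebasis n 0) *
           ((of_nat (2^n) * braket (Ebasis n x) (omega g) (Ebasis n 0) - 1) / (of_nat (2^n) - 1)))
         = Fg n q g / (of_nat (2^n) - 1)"
proof -
  let ?d = "(2::complex)^n"
  let ?W = "{w :: bool list. length w = n}"
  define E0 where "E0 = Ebasis n 0"
  define L where "L = pauli_channel n q E0"
  define M1 where "M1 = g * L * dagger g"
  define M2 where "M2 = g * E0 * dagger g"
  have U: "unitary_mat (2^n) g" using g by (simp add: clifford_def)
  note D = unitaryD[OF U]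
  have gc: "g \<in> carrier_mat (2^n) (2^n)" using D by (auto intro: carrier_matI)
  have E0c: "E0 \<in> carrier_mat (2^n) (2^n)" by (simp add: E0_def)
  have Lc: "L \<in> carrier_mat (2^n) (2^n)" by (simp add: L_def channel_carrier)
  have M1c: "M1 \<in> carrier_mat (2^n) (2^n)" using D Lc by (auto simp: M1_def intro!: carrier_matI)
  have M2c: "M2 \<in> carrier_mat (2^n) (2^n)" using D E0c by (auto simp: M2_def intro!: carrier_matI)
  have px: "braket (Ebasis n x) (\<lambda>\<rho>. omega g (pauli_channel n q \<rho>)) (Ebasis n 0) = M1 $$ (x,x)" if "x < 2^n" for x
    using braket_eval[OF that, of "\<lambda>\<rho>. omega g (pauli_channel n q \<rho>)"] M1c
    by (simp add: M1_def L_def E0_def omega_def)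
  have bx: "braket (Ebasis n x) (omega g) (Ebasis n 0) = M2 $$ (x,x)" if "x < 2^n" for x
    using braket_eval[OF that, of "omega g"] M2c
    by (simp add: M2_def E0_def omega_def)
  have dz: "?d \<noteq> 0" by simp
  have d1: "?d - 1 \<noteq> 0"
  proof
    assume "?d - 1 = 0"
    then have "(2::complex)^n = 2^0" by simp
    then have "(2::nat)^n = 2^0" by (metis of_nat_numeral of_nat_power of_nat_eq_iff)
    then show False using n by simp
  qed
  have trM1: "(\<Sum>x<2^n. M1 $$ (x,x)) = 1"
  proof -
    have "(\<Sum>x<2^n. M1 $$ (x,x)) = mtrace M1" using M1c by (simp add: mtrace_def)
    also have "\<dots> = mtrace ((g * L) * dagger g)" by (simp add: M1_def)
    also have "\<dots> = mtrace (dagger g * (g * L))" using D Lc by (intro mtrace_mult_comm[of _ "2^n" "2^n"]) (auto intro: carrier_matI)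
    also have "\<dots> = mtrace L" using Lc by (simp add: unitary_cancelL[OF U])
    also have "\<dots> = mtrace (pauli (zero_label n) * L)" using Lc by (simp add: pauli_zero is_zero_iff)
    also have "\<dots> = lam n q (zero_label n) * mtrace (pauli (zero_label n) * E0)"
      unfolding L_def by (rule channel_trace) (auto simp: E0_def)
    also have "\<dots> = 1"
    proof -
      have z00: "pauli (zero_label n) $$ (0,0) = 1" by (simp add: pauli_00 zero_label_def)
      have "mtrace (pauli (zero_label n) * E0) = 1"
        unfolding E0_def using z00 mtrace_E0[OF pauli_carrier'[of "zero_label n" n]] by simp
      then show ?thesis by (simp add: lam_zero[OF q])
    qed
    finally show ?thesis .
  qed
  define f where "f w = lam n q (Xi n w g) * pauli (Xi n w g) $$ (0,0)" for w
  have tm: "mtrace (Zop w * M1) * mtrace (Zop w * M2) = f w" if w: "length w = n" for w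
  proof -
    obtain e where e: "e = 1 \<or> e = -1" "dagger g * Zop w * g = e \<cdot>\<^sub>m pauli (Xi n w g)"
      and l: "length (Xi n w g) = n" using Xi_prop[OF g w] by auto
    have pe: "mtrace (pauli (Xi n w g) * E0) = pauli (Xi n w g) $$ (0,0)"
      unfolding E0_def by (rule mtrace_E0[OF pauli_carrier'[OF l]])
    have t1: "mtrace (Zop w * M1) = e * (lam n q (Xi n w g) * pauli (Xi n w g) $$ (0,0))"
      unfolding M1_def using mtrace_Z_conj'[OF g w Lc e(2) l] channel_trace[OF l E0c, of q] l
      by (simp add: L_def pe)
    have t2: "mtrace (Zop w * M2) = e * pauli (Xi n w g) $$ (0,0)"
      unfolding M2_def using mtrace_Z_conj'[OF g w E0c e(2) l] l by (simp add: pe)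
    have p: "pauli (Xi n w g) $$ (0,0) * pauli (Xi n w g) $$ (0,0) = pauli (Xi n w g) $$ (0,0)"
      by (simp add: pauli_00)
    have "mtrace (Zop w * M1) * mtrace (Zop w * M2) = (e * e) * lam n q (Xi n w g) * (pauli (Xi n w g) $$ (0,0) * pauli (Xi n w g) $$ (0,0))"
      by (simp add: t1 t2 algebra_simps)
    also have "\<dots> = f w" using e(1) p by (auto simp: f_def)
    finally show ?thesis .
  qed
  have prod: "(\<Sum>x<2^n. M1 $$ (x,x) * M2 $$ (x,x)) = (\<Sum>w\<in>?W. f w) / ?d"
  proof -
    have "?d * (\<Sum>x<2^n. M1 $$ (x,x) * M2 $$ (x,x)) = (\<Sum>w\<in>?W. mtrace (Zop w * M1) * mtrace (Zop w * M2))"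
      using parseval[OF M1c M2c] by simp
    also have "\<dots> = (\<Sum>w\<in>?W. f w)" by (intro sum.cong refl) (simp add: tm)
    finally show ?thesis using dz by (simp add: field_simps)
  qed
  define w0 where "w0 = replicate n False"
  have w0W: "w0 \<in> ?W" by (simp add: w0_def)
  have Xw0: "Xi n w0 g = zero_label n"
    using Xi_zero[OF g, of w0] Xi_prop[OF g, of w0] by (simp add: w0_def is_zero_iff)
  have fw0: "f w0 = 1"
  proof -
    have "pauli (zero_label n) $$ (0,0) = 1" by (simp add: pauli_00 zero_label_def)
    then show ?thesis by (simp add: f_def Xw0 lam_zero[OF q])
  qed
  have "(\<Sum>w\<in>?W. f w) = f w0 + (\<Sum>w\<in>?W - {w0}. f w)" using w0W by (simp add: sum.remove)
  also have "(\<Sum>w\<in>?W - {w0}. f w) = Fg n q g"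
  proof -
    have "(\<Sum>w\<in>?W - {w0}. f w) = (\<Sum>w\<in>?W - {w0}. if Xi n w g \<in> diag_labels n - {zero_label n} then lam n q (Xi n w g) else 0)"
    proof (rule sum.cong[OF refl])
      fix w assume "w \<in> ?W - {w0}"
      then have w: "length w = n" and ne: "w \<noteq> w0" by auto
      have l: "length (Xi n w g) = n" using Xi_prop[OF g w] by simp
      have nz: "Xi n w g \<noteq> zero_label n" using Xi_zero[OF g w] ne l by (auto simp: w0_def is_zero_iff)
      show "f w = (if Xi n w g \<in> diag_labels n - {zero_label n} then lam n q (Xi n w g) else 0)"
        using nz l by (simp add: f_def pauli_00 diag_iff)
    qed
    also have "\<dots> = Fg n q g"
      unfolding Fg_def using w0W by (subst (2) sum.remove[of _ w0]) (auto simp: Xw0)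
    finally show ?thesis .
  qed
  finally have sumf: "(\<Sum>w\<in>?W. f w) = 1 + Fg n q g" using fw0 by simp
  have "(\<Sum>x<2^n. braket (Ebasis n x) (\<lambda>\<rho>. omega g (pauli_channel n q \<rho>)) (Ebasis n 0) *
           ((of_nat (2^n) * braket (Ebasis n x) (omega g) (Ebasis n 0) - 1) / (of_nat (2^n) - 1)))
       = (\<Sum>x<2^n. M1 $$ (x,x) * ((?d * M2 $$ (x,x) - 1) / (?d - 1)))"
    by (intro sum.cong refl) (simp add: px bx)
  also have "\<dots> = (?d * (\<Sum>x<2^n. M1 $$ (x,x) * M2 $$ (x,x)) - (\<Sum>x<2^n. M1 $$ (x,x))) / (?d - 1)"
    by (simp add: sum_divide_distrib[symmetric] sum_distrib_left sum_subtractf algebra_simps)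
  also have "\<dots> = Fg n q g / (?d - 1)"
    using dz by (simp add: prod trM1 sumf)
  finally show ?thesis by simp
qed


lemma alg_final: assumes "(x::complex) + 1 \<noteq> 0" "x - 1 \<noteq> 0" shows "1 / (x + 1) * (1 / (x - 1)) * ((x + 1) * S) = S / (x - 1)"
proof -
  have "x * x - 1 = (x - 1) * (x + 1)" by (simp add: algebra_simps)
  then have "x * x - 1 \<noteq> 0" using assms by simp
  then show ?thesis using assms by (simp add: field_simps)
qed

lemma s_weight_value:
  assumes T: "clifford_transversal n G" and fin: "finite G" and n: "n \<ge> 1" and G: "card G > 0"
    and a: "a \<in> diag_labels n - {zero_label n}"
  shows "s_weight n G a = 1 / (of_nat (2^n) + 1)"
proof -
  have la: "length a = n" using a by (simp add: diag_labels_def)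
  have nz: "\<not> is_zero a" using a la by (simp add: is_zero_iff)
  have cv: "(2^n + 1) * card (SS n G a) = card G" by (rule count_value[OF T fin n la nz])
  have "s_weight n G a = (\<Sum>w\<in>{w. length w = n}. of_nat (card {g\<in>G. Xi n w g = a}) * (1 / of_nat (card G)))"
    unfolding s_weight_def by (intro sum.cong refl) simp
  also have "\<dots> = of_nat (card (SS n G a)) / of_nat (card G)"
    by (simp add: card_SS[OF fin] sum_divide_distrib)
  also have "\<dots> = 1 / (of_nat (2^n) + 1)"
  proof -
    define N where "N = (of_nat (card (SS n G a)) :: complex)"
    define x where "x = (of_nat (2^n) :: complex)"
    have eqG: "of_nat (card G) = (x + 1) * N"
      using cv unfolding N_def x_def by (metis of_nat_1 of_nat_add of_nat_mult)
    have x1: "x + 1 \<noteq> 0" unfolding x_def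
      by (metis of_nat_1 of_nat_add of_nat_eq_0_iff add_is_0 one_neq_zero)
    have "card (SS n G a) \<noteq> 0" using cv G by (cases "card (SS n G a)") auto
    then have N0: "N \<noteq> 0" by (simp add: N_def)
    have "of_nat (card (SS n G a)) / of_nat (card G) = N / ((x + 1) * N)" by (simp only: eqG N_def)
    also have "\<dots> = 1 / (x + 1)" using x1 N0 by simp
    finally show ?thesis by (simp only: x_def)
  qed
  finally show ?thesis .
qed

lemma card_SS_zero_impossible:
  assumes T: "clifford_transversal n G" and fin: "finite G" and n: "n \<ge> 1" and G: "card G > 0"
    and a: "a \<in> diag_labels n - {zero_label n}"
  shows "card (SS n G a) > 0"
proof -
  have la: "length a = n" using a by (simp add: diag_labels_def)
  have nz: "\<not> is_zero a" using a la by (simp add: is_zero_iff)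
  have cv: "(2^n + 1) * card (SS n G a) = card G" by (rule count_value[OF T fin n la nz])
  then show ?thesis using G by (cases "card (SS n G a)") auto
qed

theorem lemma7:
  fixes n :: nat and G :: "complex mat set" and q :: "complex mat \<Rightarrow> plabel \<Rightarrow> real"
  assumes "n \<ge> 1"
    and "clifford_transversal n G"
    and "\<forall>g\<in>G. prob_vector n (q g)"
  shows "(let d = (2::nat)^n;
              fhat = (\<lambda>g x. (of_nat d * braket (Ebasis n x) (omega g) (Ebasis n 0) - 1) / (of_nat d - 1));
              px = (\<lambda>g x. braket (Ebasis n x) (\<lambda>\<rho>. omega g (pauli_channel n (q g) \<rho>)) (Ebasis n 0))
          in (\<Sum>g\<in>G. (1 / of_nat (card G)) * (\<Sum>x<d. px g x * fhat g x)))
        = 1 / (of_nat (2^n) + 1) * (1 / (of_nat (2^n) - 1)) *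
            (\<Sum>a\<in>diag_labels n - {zero_label n}. lambda_bar n G q a)"
proof -
  note n = assms(1) and T = assms(2) and q = assms(3)
  let ?D0 = "diag_labels n - {zero_label n}"
  let ?W = "{w :: bool list. length w = n}"
  let ?c = "1 / of_nat (card G) :: complex"
  let ?d = "of_nat (2^n) :: complex"
  have gC: "clifford n g" if "g \<in> G" for g using T that by (auto simp: clifford_transversal_def)
  have finD0: "finite ?D0"
    by (rule finite_subset[of _ "labels n"]) (auto simp: diag_labels_def labels_def)
  have LHS: "(let d = (2::nat)^n;
              fhat = (\<lambda>g x. (of_nat d * braket (Ebasis n x) (omega g) (Ebasis n 0) - 1) / (of_nat d - 1));
              px = (\<lambda>g x. braket (Ebasis n x) (\<lambda>\<rho>. omega g (pauli_channel n (q g) \<rho>)) (Ebasis n 0))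
          in (\<Sum>g\<in>G. (1 / of_nat (card G)) * (\<Sum>x<d. px g x * fhat g x)))
      = (\<Sum>g\<in>G. ?c * (Fg n (q g) g / (?d - 1)))"
    unfolding Let_def
  proof (intro sum.cong refl)
    fix g assume g: "g \<in> G"
    note P = per_g[OF n gC[OF g] q[rule_format, OF g]]
    show "1 / of_nat (card G) * (\<Sum>x<2 ^ n. braket (Ebasis n x) (\<lambda>\<rho>. omega g (pauli_channel n (q g) \<rho>)) (Ebasis n 0) *
           ((of_nat (2 ^ n) * braket (Ebasis n x) (omega g) (Ebasis n 0) - 1) / (of_nat (2 ^ n) - 1))) =
          ?c * (Fg n (q g) g / (?d - 1))"
      by (simp only: P)
  qed
  show ?thesis
  proof (cases "card G = 0")
    case True
    have "lambda_bar n G q a = 0" for a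
      by (simp add: lambda_bar_def s_weight_def True)
    then show ?thesis unfolding LHS by (simp add: True)
  next
    case False
    then have fin: "finite G" and Gpos: "card G > 0" by (auto intro: card_ge_0_finite)
    define h where "h g a = ?c * lam n (q g) a" for g a
    have lb: "lambda_bar n G q a = (?d + 1) * (\<Sum>w\<in>?W. \<Sum>g\<in>G. if Xi n w g = a then h g a else 0)"
      if a: "a \<in> ?D0" for a
    proof -
      have la: "length a = n" using a by (simp add: diag_labels_def)
      have "lambda_bar n G q a = inverse (1 / (?d + 1)) * (\<Sum>w\<in>?W. \<Sum>g\<in>{g\<in>G. Xi n w g = a}. h g a)"
        unfolding lambda_bar_def s_weight_value[OF T fin n Gpos a] h_def using la
        by (simp add: pauli_eig_lam)
      also have "\<dots> = (?d + 1) * (\<Sum>w\<in>?W. \<Sum>g\<in>G. if Xi n w g = a then h g a else 0)"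
        using fin by (simp add: sum.inter_filter)
      finally show ?thesis .
    qed
    have d1: "?d + 1 \<noteq> 0" by (metis of_nat_1 of_nat_add of_nat_eq_0_iff add_is_0 one_neq_zero)
    have "(\<Sum>a\<in>?D0. lambda_bar n G q a) = (?d + 1) * (\<Sum>a\<in>?D0. \<Sum>w\<in>?W. \<Sum>g\<in>G. if Xi n w g = a then h g a else 0)"
      by (simp add: lb sum_distrib_left)
    also have "(\<Sum>a\<in>?D0. \<Sum>w\<in>?W. \<Sum>g\<in>G. if Xi n w g = a then h g a else 0) =
               (\<Sum>w\<in>?W. \<Sum>a\<in>?D0. \<Sum>g\<in>G. if Xi n w g = a then h g a else 0)" by (rule sum.swap)
    also have "\<dots> = (\<Sum>w\<in>?W. \<Sum>g\<in>G. \<Sum>a\<in>?D0. if Xi n w g = a then h g a else 0)"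
      by (rule sum.cong[OF refl], rule sum.swap)
    also have "\<dots> = (\<Sum>w\<in>?W. \<Sum>g\<in>G. if Xi n w g \<in> ?D0 then h g (Xi n w g) else 0)"
      using finD0 by (intro sum.cong refl) (simp add: sum.delta)
    also have "\<dots> = (\<Sum>g\<in>G. \<Sum>w\<in>?W. if Xi n w g \<in> ?D0 then h g (Xi n w g) else 0)" by (rule sum.swap)
    also have "\<dots> = (\<Sum>g\<in>G. ?c * Fg n (q g) g)"
      by (intro sum.cong refl) (simp add: Fg_def h_def sum_distrib_left if_distrib cong: if_cong)
    finally have R: "(\<Sum>a\<in>?D0. lambda_bar n G q a) = (?d + 1) * (\<Sum>g\<in>G. ?c * Fg n (q g) g)" .
    have dm1: "?d - 1 \<noteq> 0"
    proof
      assume "?d - 1 = 0"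
      then have "(of_nat (2^n) :: complex) = of_nat 1" by simp
      then have "(2::nat)^n = 1" by (simp only: of_nat_eq_iff)
      then show False using n by simp
    qed
    have L2: "(\<Sum>g\<in>G. ?c * (Fg n (q g) g / (?d - 1))) = (\<Sum>g\<in>G. ?c * Fg n (q g) g) / (?d - 1)"
      by (simp add: sum_divide_distrib)
    have R2: "1 / (?d + 1) * (1 / (?d - 1)) * ((?d + 1) * (\<Sum>g\<in>G. ?c * Fg n (q g) g)) = (\<Sum>g\<in>G. ?c * Fg n (q g) g) / (?d - 1)"
      by (rule alg_final[OF d1 dm1])
    show ?thesis unfolding LHS R L2 R2 ..
  qed
qed

end
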